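(* Let $A$ be an integral domain (commutative with unit) and let $T$ be the theory of algebraically closed fields in the language $\langle +,-,\times,0,1\rangle$. The following are equivalent: (1) $A$ is an algebraically closed field; (2) for every $n\in\mathbb N$ and every finitely generated ideal $I$ of $A[X_1,\dots,X_n]$, $\mathscr I(\mathscr Z_A(I))=\sqrt I$; (3) for every $n\in\mathbb N$ and every finitely generated ideal $I$ of $A[X_1,\dots,X_n]$, $\mathscr I(\mathscr Z_A(I))=\sqrt[T]{I}$.
   Context: $\mathscr Z_A(I)=\{\bar a\in A^n: P(\bar a)=0 \text{ for all } P\in I\}$; for $S\subseteq A^n$, $\mathscr I(S)=\{P\in A[X_1,\dots,X_n]:P(\bar a)=0\text{ for all }\bar a\in S\}$; $\sqrt I$ is the usual radical of $I$. The $T$-radical $\sqrt[T]{I}$ is the intersection of all ideals $J$ of $A[X_1,\dots,X_n]$ with $I\subseteq J$, $A[X_1,\dots,X_n]/J$ a model of $T_\forall$ (the universal consequences of $T$, i.e. an integral domain), and $J\cap A=(0)$ (where $A$ is identified with the constant polynomials). *)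

theory Defs
  imports "HOL-Library.Poly_Mapping" "HOL-Computational_Algebra.Polynomial"
begin

text \<open>Multivariate polynomials over a commutative ring: the monoid algebra
  over monomials (nat \<Rightarrow>0 nat), variables indexed by nat.
  A[X_1,...,X_n] is the subring of polynomials using only variables 0..n-1.\<close>

type_synonym 'a mpoly = "(nat \<Rightarrow>\<^sub>0 nat) \<Rightarrow>\<^sub>0 'a"

definition polys :: "nat \<Rightarrow> ('a::comm_ring_1) mpoly set" where
  "polys n = {p. \<forall>m \<in> Poly_Mapping.keys p. \<forall>i \<in> Poly_Mapping.keys m. i < n}"

definition const_poly :: "'a::comm_ring_1 \<Rightarrow> 'a mpoly" where
  "const_poly c = Poly_Mapping.single 0 c"

definition eval_mpoly :: "(nat \<Rightarrow> 'a::comm_ring_1) \<Rightarrow> 'a mpoly \<Rightarrow> 'a" where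
  "eval_mpoly a p = (\<Sum>m \<in> Poly_Mapping.keys p. Poly_Mapping.lookup p m * (\<Prod>i \<in> Poly_Mapping.keys m. a i ^ Poly_Mapping.lookup m i))"

text \<open>The points of A^n, represented as functions nat \<Rightarrow> A vanishing from index n on.\<close>
definition points :: "nat \<Rightarrow> (nat \<Rightarrow> 'a::comm_ring_1) set" where
  "points n = {a. \<forall>i\<ge>n. a i = 0}"

definition is_ideal :: "nat \<Rightarrow> ('a::comm_ring_1) mpoly set \<Rightarrow> bool" where
  "is_ideal n J \<longleftrightarrow> J \<subseteq> polys n \<and> 0 \<in> J \<and>
     (\<forall>p\<in>J. \<forall>q\<in>J. p - q \<in> J) \<and> (\<forall>p\<in>polys n. \<forall>q\<in>J. p * q \<in> J)"

definition gen_ideal :: "nat \<Rightarrow> ('a::comm_ring_1) mpoly list \<Rightarrow> 'a mpoly set" where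
  "gen_ideal n gs = {(\<Sum>i<length gs. qs ! i * gs ! i) | qs.
       length qs = length gs \<and> set qs \<subseteq> polys n}"

definition fin_gen_ideal :: "nat \<Rightarrow> ('a::comm_ring_1) mpoly set \<Rightarrow> bool" where
  "fin_gen_ideal n I \<longleftrightarrow> (\<exists>gs. set gs \<subseteq> polys n \<and> I = gen_ideal n gs)"

definition zero_set :: "nat \<Rightarrow> ('a::comm_ring_1) mpoly set \<Rightarrow> (nat \<Rightarrow> 'a) set" where
  "zero_set n I = {a \<in> points n. \<forall>p\<in>I. eval_mpoly a p = 0}"

definition vanishing_ideal :: "nat \<Rightarrow> (nat \<Rightarrow> 'a::comm_ring_1) set \<Rightarrow> 'a mpoly set" where
  "vanishing_ideal n S = {p \<in> polys n. \<forall>a\<in>S. eval_mpoly a p = 0}"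

definition radical :: "nat \<Rightarrow> ('a::comm_ring_1) mpoly set \<Rightarrow> 'a mpoly set" where
  "radical n I = {p \<in> polys n. \<exists>k. p ^ k \<in> I}"

text \<open>A[X]/J is a model of T_\<forall> (T = ACF), i.e. an integral domain:
  J is a proper ideal and the quotient has no zero divisors.\<close>
definition quotient_is_domain :: "nat \<Rightarrow> ('a::comm_ring_1) mpoly set \<Rightarrow> bool" where
  "quotient_is_domain n J \<longleftrightarrow> J \<noteq> polys n \<and>
     (\<forall>p\<in>polys n. \<forall>q\<in>polys n. p * q \<in> J \<longrightarrow> p \<in> J \<or> q \<in> J)"

definition T_radical :: "nat \<Rightarrow> ('a::comm_ring_1) mpoly set \<Rightarrow> 'a mpoly set" where
  "T_radical n I = {p \<in> polys n. \<forall>J. is_ideal n J \<and> I \<subseteq> J \<and> quotient_is_domain n J \<and>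
       (\<forall>c. const_poly c \<in> J \<longrightarrow> c = 0) \<longrightarrow> p \<in> J}"

definition alg_closed_field :: "'a::idom itself \<Rightarrow> bool" where
  "alg_closed_field _ \<longleftrightarrow> (\<forall>x::'a. x \<noteq> 0 \<longrightarrow> (\<exists>y. x * y = 1)) \<and>
     (\<forall>p::'a poly. degree p > 0 \<longrightarrow> (\<exists>x. poly p x = 0))"

end

theory Submission imports Defs "HOL-Computational_Algebra.Polynomial_Factorial"
begin

abbreviation (input) keys where "keys \<equiv> Poly_Mapping.keys"
abbreviation (input) lookup where "lookup \<equiv> Poly_Mapping.lookup"

section \<open>Ring homomorphisms\<close>

definition hom :: "('a::comm_ring_1 \<Rightarrow> 'b::comm_ring_1) \<Rightarrow> bool" where
  "hom h \<longleftrightarrow> h 1 = 1 \<and> (\<forall>x y. h (x + y) = h x + h y) \<and> (\<forall>x y. h (x * y) = h x * h y)"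

lemma homI: assumes "h 1 = 1" "\<And>x y. h (x + y) = h x + h y" "\<And>x y. h (x * y) = h x * h y"
  shows "hom h" using assms unfolding hom_def by blast

context fixes h :: "'a::comm_ring_1 \<Rightarrow> 'b::comm_ring_1" assumes H: "hom h"
begin
lemma hom_one: "h 1 = 1" using H unfolding hom_def by blast
lemma hom_add: "h (x + y) = h x + h y" using H unfolding hom_def by blast
lemma hom_mult: "h (x * y) = h x * h y" using H unfolding hom_def by blast
lemma hom_zero: "h 0 = 0"
proof -
  have "h (0 + 0) = h 0 + h 0" by (rule hom_add)
  then show ?thesis by simp
qed
lemma hom_uminus: "h (- x) = - h x"
proof -
  have "h (x + - x) = h x + h (- x)" by (rule hom_add)
  then show ?thesis using hom_zero by (metis add.commute eq_neg_iff_add_eq_0)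
qed
lemma hom_diff: "h (x - y) = h x - h y"
  using hom_add[of x "- y"] hom_uminus[of y] by simp
lemma hom_sum: "h (sum f S) = (\<Sum>x\<in>S. h (f x))"
  by (induction S rule: infinite_finite_induct) (auto simp: hom_zero hom_add)
lemma hom_prod: "h (prod f S) = (\<Prod>x\<in>S. h (f x))"
  by (induction S rule: infinite_finite_induct) (auto simp: hom_one hom_mult)
lemma hom_power: "h (x ^ k) = h x ^ k"
  by (induction k) (auto simp: hom_one hom_mult)
end

lemma hom_id: "hom (\<lambda>x. x)" by (rule homI) auto

lemma hom_comp: "hom h \<Longrightarrow> hom k \<Longrightarrow> hom (\<lambda>x. k (h x))"
  by (rule homI) (auto simp: hom_one hom_add hom_mult)

lemma hom_pCons: "hom (\<lambda>c. [:c:])"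
  by (rule homI) (auto simp: one_pCons)

section \<open>Generalised evaluation\<close>

lemma poly_mapping_expand: "(f :: 'x \<Rightarrow>\<^sub>0 'y::comm_monoid_add) = (\<Sum>k\<in>keys f. Poly_Mapping.single k (lookup f k))"
proof (rule poly_mapping_eqI)
  fix j
  have "lookup (\<Sum>k\<in>keys f. Poly_Mapping.single k (lookup f k)) j
       = (\<Sum>k\<in>keys f. lookup (Poly_Mapping.single k (lookup f k)) j)" by (simp add: lookup_sum)
  also have "\<dots> = (\<Sum>k\<in>keys f. if k = j then lookup f k else 0)"
    by (intro sum.cong) (auto simp: lookup_single)
  also have "\<dots> = lookup f j" by (auto simp: in_keys_iff)
  finally show "lookup f j = lookup (\<Sum>k\<in>keys f. Poly_Mapping.single k (lookup f k)) j" by simp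
qed

definition mono :: "(nat \<Rightarrow> 'b::comm_ring_1) \<Rightarrow> (nat \<Rightarrow>\<^sub>0 nat) \<Rightarrow> 'b" where
  "mono b m = (\<Prod>i\<in>keys m. b i ^ lookup m i)"

definition gev :: "('a::comm_ring_1 \<Rightarrow> 'b::comm_ring_1) \<Rightarrow> (nat \<Rightarrow> 'b) \<Rightarrow> 'a mpoly \<Rightarrow> 'b" where
  "gev h b p = (\<Sum>m\<in>keys p. h (lookup p m) * mono b m)"

definition X :: "nat \<Rightarrow> 'a::comm_ring_1 mpoly" where
  "X i = Poly_Mapping.single (Poly_Mapping.single i 1) 1"

lemma mono_superset: "finite S \<Longrightarrow> keys m \<subseteq> S \<Longrightarrow> mono b m = (\<Prod>i\<in>S. b i ^ lookup m i)"
  unfolding mono_def by (rule prod.mono_neutral_left) (auto simp: in_keys_iff)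

lemma mono_add: "mono b (m + m') = mono b m * mono b m'"
proof -
  let ?S = "keys m \<union> keys m'"
  have "mono b (m + m') = (\<Prod>i\<in>?S. b i ^ lookup (m + m') i)"
    by (rule mono_superset) (auto simp: keys_add)
  also have "\<dots> = (\<Prod>i\<in>?S. b i ^ lookup m i) * (\<Prod>i\<in>?S. b i ^ lookup m' i)"
    by (simp add: lookup_add power_add prod.distrib)
  also have "\<dots> = mono b m * mono b m'"
    using mono_superset[of ?S m b] mono_superset[of ?S m' b] by simp
  finally show ?thesis .
qed

lemma mono_zero [simp]: "mono b 0 = 1" by (simp add: mono_def)

lemma mono_single: "mono b (Poly_Mapping.single i k) = b i ^ k"
  by (simp add: mono_def)

context fixes h :: "'a::comm_ring_1 \<Rightarrow> 'b::comm_ring_1" assumes H: "hom h"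
begin

lemma gev_superset: "finite S \<Longrightarrow> keys p \<subseteq> S \<Longrightarrow> gev h b p = (\<Sum>m\<in>S. h (lookup p m) * mono b m)"
  unfolding gev_def by (rule sum.mono_neutral_left) (auto simp: in_keys_iff hom_zero[OF H])

lemma gev_add: "gev h b (p + q) = gev h b p + gev h b q"
proof -
  let ?S = "keys p \<union> keys q"
  have "gev h b (p + q) = (\<Sum>m\<in>?S. h (lookup (p + q) m) * mono b m)"
    by (rule gev_superset) (auto simp: keys_add)
  also have "\<dots> = (\<Sum>m\<in>?S. h (lookup p m) * mono b m) + (\<Sum>m\<in>?S. h (lookup q m) * mono b m)"
    by (simp add: lookup_add hom_add[OF H] distrib_right sum.distrib)
  also have "\<dots> = gev h b p + gev h b q"
    using gev_superset[of ?S p b] gev_superset[of ?S q b] by simp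
  finally show ?thesis .
qed

lemma gev_zero [simp]: "gev h b 0 = 0" by (simp add: gev_def)

lemma gev_sum: "gev h b (sum f S) = (\<Sum>x\<in>S. gev h b (f x))"
  by (induction S rule: infinite_finite_induct) (auto simp: gev_add)

lemma gev_single: "gev h b (Poly_Mapping.single m c) = h c * mono b m"
  by (simp add: gev_def hom_zero[OF H])

lemma gev_expand: "gev h b p = (\<Sum>m\<in>keys p. gev h b (Poly_Mapping.single m (lookup p m)))"
  unfolding gev_def[of h b p] by (simp add: gev_single)

lemma gev_mult: "gev h b (p * q) = gev h b p * gev h b q"
proof -
  have "p * q = (\<Sum>m\<in>keys p. Poly_Mapping.single m (lookup p m)) * (\<Sum>m'\<in>keys q. Poly_Mapping.single m' (lookup q m'))"
    by (metis poly_mapping_expand)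
  also have "\<dots> = (\<Sum>m\<in>keys p. \<Sum>m'\<in>keys q. Poly_Mapping.single (m + m') (lookup p m * lookup q m'))"
    by (simp add: sum_product mult_single)
  finally have "gev h b (p * q) = (\<Sum>m\<in>keys p. \<Sum>m'\<in>keys q. (h (lookup p m) * mono b m) * (h (lookup q m') * mono b m'))"
    by (simp add: gev_sum gev_single hom_mult[OF H] mono_add mult_ac)
  also have "\<dots> = gev h b p * gev h b q"
    by (simp add: gev_def sum_product)
  finally show ?thesis .
qed

lemma gev_one [simp]: "gev h b 1 = 1"
  using gev_single[where m=0 and c=1] by (simp add: hom_one[OF H])

lemma hom_gev: "hom (gev h b)"
  by (rule homI) (auto simp: gev_add gev_mult)

lemma gev_const [simp]: "gev h b (const_poly c) = h c"
  by (simp add: const_poly_def gev_single)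

lemma gev_X [simp]: "gev h b (X i) = b i"
  by (simp add: X_def gev_single mono_single hom_one[OF H])

lemma gev_comp: assumes K: "hom k"
  shows "k (gev h b p) = gev (\<lambda>c. k (h c)) (\<lambda>i. k (b i)) p"
  unfolding gev_def mono_def
  by (simp add: hom_sum[OF K] hom_mult[OF K] hom_prod[OF K] hom_power[OF K])

lemma gev_local: assumes "p \<in> polys n" "\<And>i. i < n \<Longrightarrow> b i = b' i"
  shows "gev h b p = gev h b' p"
  unfolding gev_def mono_def
  using assms unfolding polys_def by (intro sum.cong refl arg_cong2[where f="(*)"] prod.cong) auto

end

lemma eval_gev: "eval_mpoly a = gev (\<lambda>x. x) a"
  by (simp add: fun_eq_iff eval_mpoly_def gev_def mono_def)

lemma hom_const: "hom const_poly"
  by (rule homI) (simp_all add: const_poly_def single_add mult_single)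

lemma single_X_power: "(X i :: 'a::comm_ring_1 mpoly) ^ k = Poly_Mapping.single (Poly_Mapping.single i k) 1"
proof (induction k)
  case (Suc k)
  then show ?case by (simp add: X_def mult_single single_add[symmetric] mult.commute)
qed simp

lemma prod_single: "finite S \<Longrightarrow> (\<Prod>i\<in>S. Poly_Mapping.single (f i) (1::'a::comm_ring_1)) = Poly_Mapping.single (\<Sum>i\<in>S. f i) 1"
  by (induction S rule: finite_induct) (auto simp: mult_single)

lemma mono_X: "mono X m = (Poly_Mapping.single m 1 :: 'a::comm_ring_1 mpoly)"
proof -
  have "mono X m = (\<Prod>i\<in>keys m. Poly_Mapping.single (Poly_Mapping.single i (lookup m i)) (1::'a))"
    by (simp add: mono_def single_X_power)
  also have "\<dots> = Poly_Mapping.single (\<Sum>i\<in>keys m. Poly_Mapping.single i (lookup m i)) 1"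
    by (simp add: prod_single)
  also have "\<dots> = Poly_Mapping.single m 1" by (metis poly_mapping_expand)
  finally show ?thesis .
qed

lemma gev_expansion: "gev const_poly X p = (p :: 'a::comm_ring_1 mpoly)"
proof -
  have "gev const_poly X p = (\<Sum>m\<in>keys p. Poly_Mapping.single m (lookup p m))"
    unfolding gev_def mono_X const_poly_def by (simp add: mult_single)
  then show ?thesis by (metis poly_mapping_expand)
qed


section \<open>The subrings polys n\<close>

lemma keys_add_nat: "keys ((m::nat \<Rightarrow>\<^sub>0 nat) + m') \<subseteq> keys m \<union> keys m'"
  by (rule keys_add)

lemma polys_memI: "(\<And>m i. m \<in> keys p \<Longrightarrow> i \<in> keys m \<Longrightarrow> i < n) \<Longrightarrow> p \<in> polys n"
  unfolding polys_def by blast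

lemma polys_memD: "p \<in> polys n \<Longrightarrow> m \<in> keys p \<Longrightarrow> i \<in> keys m \<Longrightarrow> i < n"
  unfolding polys_def by blast

lemma polys_zero [simp]: "0 \<in> polys n" by (simp add: polys_def)
lemma polys_one [simp]: "1 \<in> polys n" by (simp add: polys_def)
lemma polys_const [simp]: "const_poly c \<in> polys n" by (simp add: polys_def const_poly_def)
lemma polys_X: "i < n \<Longrightarrow> X i \<in> polys n" by (simp add: polys_def X_def)

lemma polys_add: "p \<in> polys n \<Longrightarrow> q \<in> polys n \<Longrightarrow> p + q \<in> polys n"
  unfolding polys_def using keys_add[of p q] by blast

lemma polys_uminus: "p \<in> polys n \<Longrightarrow> - p \<in> polys n"
  unfolding polys_def by (simp add: keys_minus)

lemma polys_diff: "p \<in> polys n \<Longrightarrow> q \<in> polys n \<Longrightarrow> p - q \<in> polys n"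
  using polys_add[of p n "- q"] polys_uminus[of q n] by simp

lemma polys_mult: "p \<in> polys n \<Longrightarrow> q \<in> polys n \<Longrightarrow> p * q \<in> polys n"
proof (rule polys_memI)
  fix m i assume p: "p \<in> polys n" and q: "q \<in> polys n" and m: "m \<in> keys (p * q)" and i: "i \<in> keys m"
  from m keys_mult obtain a b where ab: "m = a + b" "a \<in> keys p" "b \<in> keys q" by blast
  from i ab keys_add_nat[of a b] have "i \<in> keys a \<or> i \<in> keys b" by blast
  then show "i < n" using p q ab polys_memD by metis
qed

lemma polys_sum: "(\<And>x. x \<in> S \<Longrightarrow> f x \<in> polys n) \<Longrightarrow> sum f S \<in> polys n"
  by (induction S rule: infinite_finite_induct) (auto intro: polys_add)

lemma polys_prod: "(\<And>x. x \<in> S \<Longrightarrow> f x \<in> polys n) \<Longrightarrow> prod f S \<in> polys n"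
  by (induction S rule: infinite_finite_induct) (auto intro: polys_mult)

lemma polys_power: "p \<in> polys n \<Longrightarrow> p ^ k \<in> polys n"
  by (induction k) (auto intro: polys_mult)

lemma polys_mono: "n \<le> N \<Longrightarrow> p \<in> polys n \<Longrightarrow> p \<in> polys N"
  unfolding polys_def by fastforce

lemma gev_polys:
  assumes "p \<in> polys n" "\<And>i. i < n \<Longrightarrow> b i \<in> polys N"
  shows "gev const_poly b p \<in> polys N"
  unfolding gev_def mono_def
  using assms polys_memD[OF assms(1)]
  by (intro polys_sum polys_mult polys_const polys_prod polys_power) auto

lemma hom_eval: "hom (eval_mpoly a)"
  by (simp add: eval_gev hom_gev hom_id)

lemma eval_const [simp]: "eval_mpoly a (const_poly c) = c"
  by (simp add: eval_gev hom_id)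

lemma eval_X [simp]: "eval_mpoly a (X i) = a i"
  by (simp add: eval_gev hom_id)

lemma eval_one [simp]: "eval_mpoly a 1 = 1"
  by (simp add: eval_gev hom_id)

lemma eval_zero [simp]: "eval_mpoly a 0 = 0"
  by (simp add: eval_gev hom_id)

lemma eval_add [simp]: "eval_mpoly a (p + q) = eval_mpoly a p + eval_mpoly a q"
  by (simp add: hom_add[OF hom_eval])
lemma eval_mult [simp]: "eval_mpoly a (p * q) = eval_mpoly a p * eval_mpoly a q"
  by (simp add: hom_mult[OF hom_eval])
lemma eval_diff [simp]: "eval_mpoly a (p - q) = eval_mpoly a p - eval_mpoly a q"
  by (simp add: hom_diff[OF hom_eval])
lemma eval_uminus [simp]: "eval_mpoly a (- q) = - eval_mpoly a q"
  by (simp add: hom_uminus[OF hom_eval])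
lemma eval_power [simp]: "eval_mpoly a (p ^ k) = eval_mpoly a p ^ k"
  by (simp add: hom_power[OF hom_eval])
lemma eval_sum [simp]: "eval_mpoly a (sum f S) = (\<Sum>x\<in>S. eval_mpoly a (f x))"
  by (simp add: hom_sum[OF hom_eval])

lemma eval_local: "p \<in> polys n \<Longrightarrow> (\<And>i. i < n \<Longrightarrow> a i = a' i) \<Longrightarrow> eval_mpoly a p = eval_mpoly a' p"
  unfolding eval_gev by (rule gev_local[OF hom_id])

section \<open>Homomorphisms and univariate polynomials\<close>

lemma hom_map_poly: assumes H: "hom h" shows "hom (map_poly h)"
proof (rule homI)
  have h0: "h 0 = 0" by (rule hom_zero[OF H])
  show "map_poly h 1 = 1" by (simp add: hom_one[OF H])
  show "map_poly h (x + y) = map_poly h x + map_poly h y" for x y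
    by (rule poly_eqI) (simp add: coeff_map_poly h0 hom_add[OF H])
  show "map_poly h (x * y) = map_poly h x * map_poly h y" for x y
    by (rule poly_eqI) (simp add: coeff_map_poly h0 coeff_mult hom_sum[OF H] hom_mult[OF H])
qed

lemma hom_poly_eval: "hom (\<lambda>P. poly P x)"
  by (rule homI) simp_all

lemma hom_poly_comm: assumes H: "hom h" shows "h (poly P x) = poly (map_poly h P) (h x)"
proof (induction P)
  case (pCons c P)
  then show ?case
    by (simp add: map_poly_pCons hom_zero[OF H] hom_add[OF H] hom_mult[OF H])
qed (simp add: hom_zero[OF H])

lemma poly_const_X: "poly (map_poly (\<lambda>c. [:c:]) k) [:0, 1:] = (k :: 'a::comm_ring_1 poly)"
proof (induction k)
  case (pCons c k)
  have "[:0, 1:] * k = pCons 0 k" by (simp add: mult_pCons_left)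
  moreover have "[:c:] + pCons 0 k = pCons c k" by simp
  ultimately show ?case using pCons by (simp add: map_poly_pCons)
qed simp


lemma const_zero [simp]: "const_poly 0 = 0" by (simp add: const_poly_def)
lemma const_one [simp]: "const_poly 1 = 1" by (simp add: const_poly_def)

lemma map_eval_pCons [simp]: "map_poly (eval_mpoly a) (pCons c p) = pCons (eval_mpoly a c) (map_poly (eval_mpoly a) p)"
  by (simp add: map_poly_pCons)

definition bb :: "nat \<Rightarrow> nat \<Rightarrow> 'a::comm_ring_1 mpoly poly" where
  "bb n i = (if i < n then [:X i:] else if i = n then [:0, 1:] else 0)"

definition Phi :: "nat \<Rightarrow> 'a::comm_ring_1 mpoly \<Rightarrow> 'a mpoly poly" where
  "Phi n = gev (\<lambda>c. [:const_poly c:]) (bb n)"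

lemma hom_cc: "hom (\<lambda>c. [:const_poly c:])"
  using hom_comp[OF hom_const hom_pCons] by simp

lemma hom_Phi: "hom (Phi n)"
  unfolding Phi_def by (rule hom_gev[OF hom_cc])

lemma Phi_const [simp]: "Phi n (const_poly c) = [:const_poly c:]"
  by (simp add: Phi_def hom_cc)
lemma Phi_X: "i < n \<Longrightarrow> Phi n (X i) = [:X i:]"
  by (simp add: Phi_def hom_cc bb_def)
lemma Phi_Xn: "Phi n (X n) = [:0, 1:]"
  by (simp add: Phi_def hom_cc bb_def)

definition cpoly :: "nat \<Rightarrow> 'a::comm_ring_1 mpoly poly \<Rightarrow> bool" where
  "cpoly n Q \<longleftrightarrow> (\<forall>k. coeff Q k \<in> polys n)"

lemma cpoly_add: "cpoly n P \<Longrightarrow> cpoly n Q \<Longrightarrow> cpoly n (P + Q)"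
  by (simp add: cpoly_def polys_add)
lemma cpoly_mult: "cpoly n P \<Longrightarrow> cpoly n Q \<Longrightarrow> cpoly n (P * Q)"
  unfolding cpoly_def coeff_mult by (auto intro!: polys_sum polys_mult)
lemma cpoly_one: "cpoly n 1"
  by (simp add: cpoly_def coeff_1)
lemma cpoly_zero: "cpoly n 0"
  by (simp add: cpoly_def)
lemma cpoly_sum: "(\<And>x. x \<in> S \<Longrightarrow> cpoly n (f x)) \<Longrightarrow> cpoly n (sum f S)"
  by (induction S rule: infinite_finite_induct) (auto intro: cpoly_add cpoly_zero)
lemma cpoly_prod: "(\<And>x. x \<in> S \<Longrightarrow> cpoly n (f x)) \<Longrightarrow> cpoly n (prod f S)"
  by (induction S rule: infinite_finite_induct) (auto intro: cpoly_mult cpoly_one)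
lemma cpoly_power: "cpoly n P \<Longrightarrow> cpoly n (P ^ k)"
  by (induction k) (auto intro: cpoly_mult cpoly_one)
lemma cpoly_pCons: "c \<in> polys n \<Longrightarrow> cpoly n [:c:]"
  by (simp add: cpoly_def coeff_pCons split: nat.splits)

lemma cpoly_bb: "i < Suc n \<Longrightarrow> cpoly n (bb n i)"
  by (auto simp: bb_def cpoly_def coeff_pCons polys_X split: nat.splits)

lemma Phi_cpoly: assumes "p \<in> polys (Suc n)" shows "cpoly n (Phi n p)"
  unfolding Phi_def gev_def mono_def
  using polys_memD[OF assms]
  by (intro cpoly_sum cpoly_mult cpoly_pCons polys_const cpoly_prod cpoly_power cpoly_bb) auto

lemma Phi_coeff: "p \<in> polys (Suc n) \<Longrightarrow> coeff (Phi n p) k \<in> polys n"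
  using Phi_cpoly cpoly_def by blast

lemma Phi_inv: assumes "p \<in> polys (Suc n)" shows "poly (Phi n p) (X n) = p"
proof -
  have "poly (Phi n p) (X n) = gev (\<lambda>c. poly [:const_poly c:] (X n)) (\<lambda>i. poly (bb n i) (X n)) p"
    unfolding Phi_def by (rule gev_comp[OF hom_cc hom_poly_eval])
  also have "\<dots> = gev const_poly (\<lambda>i. poly (bb n i) (X n)) p" by simp
  also have "\<dots> = gev const_poly X p"
    by (rule gev_local[OF hom_const assms]) (auto simp: bb_def less_Suc_eq)
  also have "\<dots> = p" by (rule gev_expansion)
  finally show ?thesis .
qed

lemma Phi_R: assumes "r \<in> polys n" shows "Phi n r = [:r:]"
proof -
  have "Phi n r = gev (\<lambda>c. [:const_poly c:]) (\<lambda>i. [:X i:]) r"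
    unfolding Phi_def by (rule gev_local[OF hom_cc assms]) (simp add: bb_def)
  also have "\<dots> = [: gev const_poly X r :]"
    by (rule gev_comp[OF hom_const hom_pCons, symmetric])
  finally show ?thesis by (simp add: gev_expansion)
qed

lemma Phi_decomp: assumes "p \<in> polys (Suc n)"
  shows "p = (\<Sum>k\<le>degree (Phi n p). coeff (Phi n p) k * X n ^ k)"
  using Phi_inv[OF assms] by (simp add: poly_altdef)

definition spec :: "nat \<Rightarrow> (nat \<Rightarrow> 'a) \<Rightarrow> 'a::comm_ring_1 mpoly \<Rightarrow> 'a poly" where
  "spec n a q = map_poly (eval_mpoly a) (Phi n q)"

lemma hom_spec: "hom (spec n a)"
  unfolding spec_def by (rule hom_comp[OF hom_Phi hom_map_poly[OF hom_eval]])

lemma coeff_spec: "coeff (spec n a q) k = eval_mpoly a (coeff (Phi n q) k)"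
  by (simp add: spec_def coeff_map_poly)

lemma spec_const [simp]: "spec n a (const_poly c) = [:c:]"
  by (simp add: spec_def)
lemma spec_Xn [simp]: "spec n a (X n) = [:0, 1:]"
  by (simp add: spec_def Phi_Xn)

lemma spec_eval: assumes "q \<in> polys (Suc n)"
  shows "poly (spec n a q) b = eval_mpoly (a(n := b)) q"
proof -
  have hk: "hom (\<lambda>P. poly (map_poly (eval_mpoly a) P) b)"
    by (rule hom_comp[OF hom_map_poly[OF hom_eval] hom_poly_eval])
  have "poly (spec n a q) b = gev (\<lambda>c. poly (map_poly (eval_mpoly a) [:const_poly c:]) b)
        (\<lambda>i. poly (map_poly (eval_mpoly a) (bb n i)) b) q"
    unfolding spec_def Phi_def by (rule gev_comp[OF hom_cc hk])
  also have "\<dots> = gev (\<lambda>c. c) (\<lambda>i. poly (map_poly (eval_mpoly a) (bb n i)) b) q" by simp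
  also have "\<dots> = gev (\<lambda>c. c) (a(n := b)) q"
    by (rule gev_local[OF hom_id assms]) (auto simp: bb_def less_Suc_eq)
  finally show ?thesis by (simp add: eval_gev)
qed

definition L :: "nat \<Rightarrow> 'a::comm_ring_1 poly \<Rightarrow> 'a mpoly" where
  "L n k = poly (map_poly const_poly k) (X n)"

lemma L_polys: "L n k \<in> polys (Suc n)"
  unfolding L_def poly_altdef
  by (intro polys_sum polys_mult polys_power polys_X) (auto simp: coeff_map_poly)

lemma spec_L: "spec n a (L n k) = k"
proof -
  have "spec n a (L n k) = poly (map_poly (spec n a) (map_poly const_poly k)) (spec n a (X n))"
    unfolding L_def by (rule hom_poly_comm[OF hom_spec])
  also have "map_poly (spec n a) (map_poly const_poly k) = map_poly (\<lambda>c. [:c:]) k"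
    by (subst map_poly_map_poly) (auto simp: hom_zero[OF hom_spec] o_def)
  finally show ?thesis by (simp add: poly_const_X)
qed


definition jp :: "nat \<Rightarrow> (nat \<Rightarrow> 'a) \<Rightarrow> 'a::comm_ring_1 mpoly set" where
  "jp n a = {h. \<exists>D c. (\<forall>k<D. c k \<in> polys n \<and> eval_mpoly a (c k) = 0) \<and> h = (\<Sum>k<D. c k * X n ^ k)}"

definition submod :: "nat \<Rightarrow> 'a::comm_ring_1 mpoly set \<Rightarrow> bool" where
  "submod n W \<longleftrightarrow> 0 \<in> W \<and> (\<forall>x\<in>W. \<forall>y\<in>W. x + y \<in> W) \<and> (\<forall>r\<in>polys n. \<forall>w\<in>W. r * w \<in> W)"

lemma submod_sum: "submod n W \<Longrightarrow> (\<And>x. x \<in> S \<Longrightarrow> f x \<in> W) \<Longrightarrow> sum f S \<in> W"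
  by (induction S rule: infinite_finite_induct) (auto simp: submod_def)

lemma polys_Suc: "p \<in> polys n \<Longrightarrow> p \<in> polys (Suc n)"
  by (rule polys_mono[of n]) auto

lemma nakayama:
  fixes a :: "nat \<Rightarrow> 'a::comm_ring_1" and B :: "'a mpoly list"
  shows "\<And>W. submod n W \<Longrightarrow> W \<subseteq> polys (Suc n) \<Longrightarrow> set B \<subseteq> polys (Suc n) \<Longrightarrow>
   (\<forall>p\<in>polys (Suc n). \<exists>w\<in>W. \<exists>c. (\<forall>k<length B. c k \<in> polys n) \<and> p = w + (\<Sum>k<length B. c k * B!k)) \<Longrightarrow>
   (\<forall>p\<in>polys (Suc n). \<exists>w\<in>W. \<exists>h\<in>jp n a. p = w + h) \<Longrightarrow>
   \<exists>r\<in>polys n. eval_mpoly a r = 1 \<and> (\<forall>p\<in>polys (Suc n). r * p \<in> W)"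
proof (induction B)
  case Nil
  have "\<forall>p\<in>polys (Suc n). 1 * p \<in> W" using Nil(4) by auto
  then show ?case by (intro bexI[of _ 1]) auto
next
  case (Cons m B W)
  note sm = Cons.prems(1)
  have mP: "m \<in> polys (Suc n)" and BP: "set B \<subseteq> polys (Suc n)" using Cons.prems(3) by auto
  define W' where "W' = {w + c * m | w c. w \<in> W \<and> c \<in> polys n}"
  have WW': "W \<subseteq> W'"
  proof
    fix w assume "w \<in> W"
    then show "w \<in> W'" unfolding W'_def by (intro CollectI exI[of _ w] exI[of _ 0]) simp
  qed
  have sm': "submod n W'"
    unfolding submod_def
  proof (intro conjI ballI)
    show "0 \<in> W'" unfolding W'_def using sm by (intro CollectI exI[of _ 0]) (auto simp: submod_def)
    fix x y assume "x \<in> W'" "y \<in> W'"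
    then obtain w1 c1 w2 c2 where "x = w1 + c1 * m" "y = w2 + c2 * m" "w1 \<in> W" "w2 \<in> W" "c1 \<in> polys n" "c2 \<in> polys n"
      unfolding W'_def by blast
    moreover have "w1 + w2 \<in> W" using sm calculation by (auto simp: submod_def)
    moreover have "c1 + c2 \<in> polys n" using calculation by (auto intro: polys_add)
    moreover have "x + y = (w1 + w2) + (c1 + c2) * m" using calculation by (simp add: algebra_simps)
    ultimately show "x + y \<in> W'" unfolding W'_def by blast
  next
    fix r y :: "'a mpoly" assume r: "r \<in> polys n" and "y \<in> W'"
    then obtain w c where "y = w + c * m" "w \<in> W" "c \<in> polys n"
      unfolding W'_def by blast
    moreover have "r * w \<in> W" using sm calculation r by (auto simp: submod_def)
    moreover have "r * c \<in> polys n" using calculation r by (auto intro: polys_mult)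
    moreover have "r * y = (r * w) + (r * c) * m" using calculation by (simp add: algebra_simps)
    ultimately show "r * y \<in> W'" unfolding W'_def by blast
  qed
  have W'P: "W' \<subseteq> polys (Suc n)"
    unfolding W'_def using Cons.prems(2) mP polys_Suc by (blast intro: polys_add polys_mult)
  have span': "\<forall>p\<in>polys (Suc n). \<exists>w\<in>W'. \<exists>c. (\<forall>k<length B. c k \<in> polys n) \<and> p = w + (\<Sum>k<length B. c k * B!k)"
  proof
    fix p :: "'a mpoly" assume "p \<in> polys (Suc n)"
    then obtain w c where wc: "w \<in> W" "\<forall>k<length (m # B). c k \<in> polys n"
      "p = w + (\<Sum>k<length (m # B). c k * (m # B)!k)" using Cons.prems(4) by blast
    have "p = (w + c 0 * m) + (\<Sum>k<length B. c (Suc k) * B!k)"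
      using wc(3) unfolding length_Cons sum.lessThan_Suc_shift by (simp add: add.assoc)
    moreover have "w + c 0 * m \<in> W'" unfolding W'_def using wc by force
    moreover have "\<forall>k<length B. c (Suc k) \<in> polys n" using wc(2) by auto
    ultimately show "\<exists>w\<in>W'. \<exists>c. (\<forall>k<length B. c k \<in> polys n) \<and> p = w + (\<Sum>k<length B. c k * B!k)"
      by (intro bexI[of _ "w + c 0 * m"] exI[of _ "\<lambda>k. c (Suc k)"]) auto
  qed
  have jp': "\<forall>p\<in>polys (Suc n). \<exists>w\<in>W'. \<exists>h\<in>jp n a. p = w + h"
    using Cons.prems(5) WW' by blast
  from Cons.IH[OF sm' W'P BP span' jp']
  obtain r' where r': "r' \<in> polys n" "eval_mpoly a r' = 1" "\<forall>p\<in>polys (Suc n). r' * p \<in> W'"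
    by blast
  have "r' * m \<in> polys (Suc n)" using r'(1) mP by (auto intro: polys_mult polys_Suc)
  then obtain w0 h where w0h: "w0 \<in> W" "h \<in> jp n a" "r' * m = w0 + h" using Cons.prems(5) by blast
  then obtain D c where Dc: "\<forall>k<D. c k \<in> polys n \<and> eval_mpoly a (c k) = 0" "h = (\<Sum>k<D. c k * X n ^ k)"
    unfolding jp_def by blast
  have "\<forall>k. \<exists>wd. fst wd \<in> W \<and> snd wd \<in> polys n \<and> r' * X n ^ k = fst wd + snd wd * m"
  proof
    fix k
    have "X n ^ k \<in> polys (Suc n)" by (auto intro: polys_power polys_X)
    then have "r' * X n ^ k \<in> W'" using r'(3) by blast
    then obtain w d where "w \<in> W" "d \<in> polys n" "r' * X n ^ k = w + d * m" unfolding W'_def by blast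
    then show "\<exists>wd. fst wd \<in> W \<and> snd wd \<in> polys n \<and> r' * X n ^ k = fst wd + snd wd * m"
      by (intro exI[of _ "(w, d)"]) auto
  qed
  then obtain wd where wd: "\<And>k. fst (wd k) \<in> W" "\<And>k. snd (wd k) \<in> polys n"
      "\<And>k. r' * X n ^ k = fst (wd k) + snd (wd k) * m"
    by metis
  define j where "j = (\<Sum>k<D. c k * snd (wd k))"
  have jR: "j \<in> polys n" unfolding j_def using Dc(1) wd(2) by (auto intro!: polys_sum polys_mult)
  have j0: "eval_mpoly a j = 0" unfolding j_def using Dc(1) by simp
  have "r' * (r' * m) = r' * w0 + (\<Sum>k<D. c k * (r' * X n ^ k))"
    using w0h(3) Dc(2) by (simp add: algebra_simps sum_distrib_left)
  also have "\<dots> = r' * w0 + (\<Sum>k<D. c k * fst (wd k)) + j * m"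
    by (simp add: wd(3) j_def algebra_simps sum.distrib sum_distrib_left)
  finally have key: "(r' * r' - j) * m = r' * w0 + (\<Sum>k<D. c k * fst (wd k))"
    by (simp add: algebra_simps)
  have keyW: "(r' * r' - j) * m \<in> W"
  proof -
    have "(\<Sum>k<D. c k * fst (wd k)) \<in> W"
      using Dc(1) wd(1) sm by (intro submod_sum[OF sm]) (auto simp: submod_def)
    moreover have "r' * w0 \<in> W" using sm w0h(1) r'(1) by (auto simp: submod_def)
    ultimately show ?thesis unfolding key using sm by (auto simp: submod_def)
  qed
  define r where "r = (r' * r' - j) * r'"
  have rR: "r \<in> polys n" unfolding r_def using r'(1) jR by (auto intro!: polys_mult polys_diff)
  have r1: "eval_mpoly a r = 1" unfolding r_def using r'(2) j0 by simp
  have "\<forall>p\<in>polys (Suc n). r * p \<in> W"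
  proof
    fix p :: "'a mpoly" assume "p \<in> polys (Suc n)"
    then have "r' * p \<in> W'" using r'(3) by blast
    then obtain w c where wc: "w \<in> W" "c \<in> polys n" "r' * p = w + c * m" unfolding W'_def by blast
    have "r * p = (r' * r' - j) * (r' * p)" unfolding r_def by (simp add: mult.assoc)
    also have "\<dots> = (r' * r' - j) * w + c * ((r' * r' - j) * m)"
      unfolding wc(3) by (simp add: algebra_simps)
    finally have "r * p = (r' * r' - j) * w + c * ((r' * r' - j) * m)" .
    moreover have "r' * r' - j \<in> polys n" using r'(1) jR by (auto intro!: polys_mult polys_diff)
    ultimately show "r * p \<in> W" using sm wc keyW by (auto simp: submod_def)
  qed
  then show ?case using rR r1 by blast
qed


context fixes N :: nat and I :: "'a::comm_ring_1 mpoly set" assumes I: "is_ideal N I"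
begin
lemma ideal_sub: "I \<subseteq> polys N" using I by (simp add: is_ideal_def)
lemma ideal_0: "0 \<in> I" using I by (simp add: is_ideal_def)
lemma ideal_diff: "p \<in> I \<Longrightarrow> q \<in> I \<Longrightarrow> p - q \<in> I" using I by (simp add: is_ideal_def)
lemma ideal_mult: "p \<in> polys N \<Longrightarrow> q \<in> I \<Longrightarrow> p * q \<in> I" using I by (simp add: is_ideal_def)
lemma ideal_uminus: "q \<in> I \<Longrightarrow> - q \<in> I" using ideal_diff[OF ideal_0, of q] by simp
lemma ideal_add: "p \<in> I \<Longrightarrow> q \<in> I \<Longrightarrow> p + q \<in> I" using ideal_diff[of p "- q"] ideal_uminus[of q] by simp
lemma ideal_sum: "(\<And>x. x \<in> S \<Longrightarrow> f x \<in> I) \<Longrightarrow> sum f S \<in> I"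
  by (induction S rule: infinite_finite_induct) (auto intro: ideal_add ideal_0)
end

lemma span_monic:
  assumes I: "is_ideal (Suc n) I" and g: "g \<in> I" and mon: "lead_coeff (Phi n g) = 1"
  shows "p \<in> polys (Suc n) \<Longrightarrow> \<exists>w\<in>I. \<exists>c. (\<forall>k<degree (Phi n g). c k \<in> polys n) \<and>
           p = w + (\<Sum>k<degree (Phi n g). c k * X n ^ k)"
proof (induction "degree (Phi n p)" arbitrary: p rule: less_induct)
  case less
  define d where "d = degree (Phi n g)"
  define D where "D = degree (Phi n p)"
  have gP: "g \<in> polys (Suc n)" using g ideal_sub[OF I] by blast
  show ?case
  proof (cases "d = 0")
    case True
    then have "Phi n g = [:1:]" using mon degree_0_id[of "Phi n g"] unfolding d_def by simp
    then have "g = 1" using Phi_inv[OF gP] by simp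
    then have "p \<in> I" using ideal_mult[OF I less.prems g] by simp
    then show ?thesis using True unfolding d_def by (intro bexI[of _ p] exI[of _ "\<lambda>_. 0"]) auto
  next
    case dpos: False
    show ?thesis
    proof (cases "D < d")
      case True
      have "p = (\<Sum>k\<le>D. coeff (Phi n p) k * X n ^ k)" using Phi_decomp[OF less.prems] D_def by simp
      also have "\<dots> = (\<Sum>k<d. coeff (Phi n p) k * X n ^ k)"
      proof (rule sum.mono_neutral_cong_left)
        show "\<forall>i\<in>{..<d} - {..D}. coeff (Phi n p) i * X n ^ i = 0"
          by (auto simp: D_def coeff_eq_0)
      qed (use True in auto)
      finally have "p = 0 + (\<Sum>k<d. coeff (Phi n p) k * X n ^ k)" by simp
      then show ?thesis using ideal_0[OF I] Phi_coeff[OF less.prems] unfolding d_def by blast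
    next
      case Dge: False
      define lc where "lc = lead_coeff (Phi n p)"
      have lcR: "lc \<in> polys n" unfolding lc_def by (rule Phi_coeff[OF less.prems])
      define p' where "p' = p - lc * X n ^ (D - d) * g"
      have lcXP: "lc * X n ^ (D - d) \<in> polys (Suc n)"
        using polys_Suc[OF lcR] polys_X[of n "Suc n"] by (blast intro: polys_mult polys_power)
      have p'P: "p' \<in> polys (Suc n)" unfolding p'_def
        using less.prems lcXP gP by (auto intro!: polys_diff polys_mult)
      have "Phi n p' = Phi n p - [:lc:] * [:0, 1:] ^ (D - d) * Phi n g"
        unfolding p'_def by (simp add: hom_diff[OF hom_Phi] hom_mult[OF hom_Phi] hom_power[OF hom_Phi] Phi_R[OF lcR] Phi_Xn)
      also have "[:lc:] * [:0, 1:] ^ (D - d) = monom lc (D - d)" by (simp add: monom_altdef)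
      finally have Pp': "Phi n p' = Phi n p - monom lc (D - d) * Phi n g" .
      have "\<forall>i>D - 1. coeff (Phi n p') i = 0"
      proof (intro allI impI)
        fix i assume "i > D - 1"
        then have i: "i \<ge> D" using dpos Dge by linarith
        show "coeff (Phi n p') i = 0"
        proof (cases "i = D")
          case True
          then show ?thesis using Dge mon unfolding Pp' lc_def d_def D_def by (simp add: coeff_monom_mult)
        next
          case False
          then have "i > D" using i by simp
          moreover have "i - (D - d) > d" using \<open>i > D\<close> Dge by linarith
          ultimately show ?thesis using i unfolding Pp' d_def D_def
            by (simp add: coeff_monom_mult coeff_eq_0)
        qed
      qed
      then have "degree (Phi n p') \<le> D - 1" by (rule degree_le)
      then have "degree (Phi n p') < D" using dpos Dge by linarith
      then obtain w c where wc: "w \<in> I" "\<forall>k<d. c k \<in> polys n" "p' = w + (\<Sum>k<d. c k * X n ^ k)"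
        using less.hyps[OF _ p'P] unfolding D_def d_def by blast
      have "w + lc * X n ^ (D - d) * g \<in> I"
        using ideal_add[OF I wc(1) ideal_mult[OF I lcXP g]] by (simp add: mult.assoc)
      moreover have "p = (w + lc * X n ^ (D - d) * g) + (\<Sum>k<d. c k * X n ^ k)"
        using wc(3) unfolding p'_def by (simp add: algebra_simps)
      ultimately show ?thesis using wc(2) unfolding d_def by blast
    qed
  qed
qed


lemma submod_ideal: assumes I: "is_ideal (Suc n) I" shows "submod n I"
  unfolding submod_def using ideal_0[OF I] ideal_add[OF I] ideal_mult[OF I] polys_Suc by blast

lemma no_spec_one:
  fixes a :: "nat \<Rightarrow> 'a::comm_ring_1"
  assumes I: "is_ideal (Suc n) I" and g: "g \<in> I" "lead_coeff (Phi n g) = 1"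
    and a0: "\<forall>r \<in> I \<inter> polys n. eval_mpoly a r = 0"
    and f: "f \<in> I" "spec n a f = 1"
  shows False
proof -
  define d where "d = degree (Phi n g)"
  define B :: "'a mpoly list" where "B = map (\<lambda>k. X n ^ k) [0..<d]"
  have IP: "I \<subseteq> polys (Suc n)" by (rule ideal_sub[OF I])
  have fP: "f \<in> polys (Suc n)" using f IP by blast
  have BP: "set B \<subseteq> polys (Suc n)" unfolding B_def by (auto intro: polys_power polys_X)
  have span: "\<forall>p\<in>polys (Suc n). \<exists>w\<in>I. \<exists>c. (\<forall>k<length B. c k \<in> polys n) \<and> p = w + (\<Sum>k<length B. c k * B!k)"
  proof
    fix p :: "'a mpoly" assume "p \<in> polys (Suc n)"
    from span_monic[OF I g this] obtain w c where "w \<in> I" "\<forall>k<d. c k \<in> polys n"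
      "p = w + (\<Sum>k<d. c k * X n ^ k)" unfolding d_def by blast
    moreover have "(\<Sum>k<d. c k * X n ^ k) = (\<Sum>k<length B. c k * B!k)"
      unfolding B_def by (intro sum.cong) auto
    moreover have "length B = d" unfolding B_def by simp
    ultimately show "\<exists>w\<in>I. \<exists>c. (\<forall>k<length B. c k \<in> polys n) \<and> p = w + (\<Sum>k<length B. c k * B!k)"
      by metis
  qed
  have jpc: "\<forall>p\<in>polys (Suc n). \<exists>w\<in>I. \<exists>h\<in>jp n a. p = w + h"
  proof
    fix p :: "'a mpoly" assume pP: "p \<in> polys (Suc n)"
    define h where "h = p - p * f"
    have hP: "h \<in> polys (Suc n)" unfolding h_def using pP fP by (auto intro: polys_diff polys_mult)
    have sh: "spec n a h = 0" unfolding h_def using f(2) by (simp add: hom_diff[OF hom_spec] hom_mult[OF hom_spec])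
    have "h \<in> jp n a"
      unfolding jp_def
    proof (intro CollectI exI conjI allI impI)
      fix k
      show "coeff (Phi n h) k \<in> polys n" by (rule Phi_coeff[OF hP])
      have "coeff (spec n a h) k = 0" using sh by simp
      then show "eval_mpoly a (coeff (Phi n h) k) = 0" by (simp add: coeff_spec)
    next
      show "h = (\<Sum>k<Suc (degree (Phi n h)). coeff (Phi n h) k * X n ^ k)"
        using Phi_decomp[OF hP] by (simp add: lessThan_Suc_atMost)
    qed
    moreover have "p * f \<in> I" by (rule ideal_mult[OF I pP f(1)])
    moreover have "p = p * f + h" unfolding h_def by simp
    ultimately show "\<exists>w\<in>I. \<exists>h\<in>jp n a. p = w + h" by blast
  qed
  from nakayama[OF submod_ideal[OF I] IP BP span jpc]
  obtain r where r: "r \<in> polys n" "eval_mpoly a r = 1" "\<forall>p\<in>polys (Suc n). r * p \<in> I" by blast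
  have "r \<in> I" using r(3) by (metis mult.right_neutral polys_one)
  then show False using a0 r by auto
qed

lemma monic_case:
  fixes a :: "nat \<Rightarrow> 'a::idom"
  assumes field: "\<forall>x::'a. x \<noteq> 0 \<longrightarrow> (\<exists>y. x * y = 1)"
    and closed: "\<forall>p::'a poly. degree p > 0 \<longrightarrow> (\<exists>x. poly p x = 0)"
    and I: "is_ideal (Suc n) I" and g: "g \<in> I" "lead_coeff (Phi n g) = 1"
    and a0: "\<forall>r \<in> I \<inter> polys n. eval_mpoly a r = 0"
  shows "\<exists>b. \<forall>f\<in>I. eval_mpoly (a(n := b)) f = 0"
proof -
  have IP: "I \<subseteq> polys (Suc n)" by (rule ideal_sub[OF I])
  have nos: "spec n a f \<noteq> 1" if "f \<in> I" for f
    using no_spec_one[OF I g a0 that] by blast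
  have "coeff (spec n a g) (degree (Phi n g)) = 1" using g(2) by (simp add: coeff_spec)
  then have sg: "spec n a g \<noteq> 0" by auto
  obtain f0 where f0: "f0 \<in> I \<and> spec n a f0 \<noteq> 0"
    "\<forall>f. f \<in> I \<and> spec n a f \<noteq> 0 \<longrightarrow> degree (spec n a f0) \<le> degree (spec n a f)"
    using ex_has_least_nat[of "\<lambda>f. f \<in> I \<and> spec n a f \<noteq> 0" g "\<lambda>f. degree (spec n a f)"] g(1) sg
    by blast
  define h where "h = spec n a f0"
  have "lead_coeff h \<noteq> 0" using f0 unfolding h_def by simp
  then obtain u where u: "lead_coeff h * u = 1" using field by blast
  then have u0: "u \<noteq> 0" by (metis mult_zero_right zero_neq_one)
  define f1 where "f1 = const_poly u * f0"
  have f1I: "f1 \<in> I" unfolding f1_def using ideal_mult[OF I polys_const f0(1)[THEN conjunct1]] .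
  define h1 where "h1 = spec n a f1"
  have h1: "h1 = [:u:] * h" unfolding h1_def f1_def h_def by (simp add: hom_mult[OF hom_spec])
  have h0: "h \<noteq> 0" using f0 h_def by simp
  have lch1: "lead_coeff h1 = 1" unfolding h1 using u u0 by (simp add: lead_coeff_mult mult.commute)
  have dh1: "degree h1 = degree h" unfolding h1 using u0 h0 by (simp add: degree_mult_eq)
  have dpos: "degree h > 0"
  proof (rule ccontr)
    assume "\<not> degree h > 0"
    then have "degree h1 = 0" using dh1 by simp
    then have "h1 = [:1:]" using degree_0_id[of h1] lch1 by simp
    then show False using nos[OF f1I] unfolding h1_def by simp
  qed
  then obtain b where b: "poly h b = 0" using closed by blast
  have "eval_mpoly (a(n := b)) f = 0" if fI: "f \<in> I" for f
  proof -
    have fP: "f \<in> polys (Suc n)" using fI IP by blast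
    obtain q r where qr: "pseudo_divmod (spec n a f) h1 = (q, r)" by (metis surj_pair)
    have h10: "h1 \<noteq> 0" using lch1 by auto
    from pseudo_divmod[OF h10 qr] lch1
    have eq: "spec n a f = h1 * q + r" and rd: "r = 0 \<or> degree r < degree h1" by auto
    have "r = spec n a (f - L n q * f1)"
      using eq unfolding h1_def by (simp add: hom_diff[OF hom_spec] hom_mult[OF hom_spec] spec_L)
    moreover have "f - L n q * f1 \<in> I" using ideal_diff[OF I fI ideal_mult[OF I L_polys f1I]] .
    ultimately have "r = 0" using rd f0(2) dh1 unfolding h_def by fastforce
    then have "poly (spec n a f) b = 0" using eq b h1 by simp
    then show ?thesis using spec_eval[OF fP] by simp
  qed
  then show ?thesis by blast
qed


lemma digits_unique:
  fixes D :: nat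
  assumes "0 < D"
  shows "(\<forall>j\<le>k. u j < D) \<Longrightarrow> (\<forall>j\<le>k. v j < D) \<Longrightarrow>
         (\<Sum>j\<le>k. u j * D ^ j) = (\<Sum>j\<le>k. v j * D ^ j) \<Longrightarrow> j \<le> k \<Longrightarrow> u j = v j"
proof (induction k arbitrary: u v j)
  case 0
  then show ?case by simp
next
  case (Suc k)
  have eu: "(\<Sum>j\<le>Suc k. u j * D ^ j) = u 0 + D * (\<Sum>j\<le>k. u (Suc j) * D ^ j)"
    unfolding sum.atMost_Suc_shift by (simp add: sum_distrib_left mult_ac)
  have ev: "(\<Sum>j\<le>Suc k. v j * D ^ j) = v 0 + D * (\<Sum>j\<le>k. v (Suc j) * D ^ j)"
    unfolding sum.atMost_Suc_shift by (simp add: sum_distrib_left mult_ac)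
  have u0: "u 0 < D" "v 0 < D" using Suc.prems by auto
  have "(u 0 + D * (\<Sum>j\<le>k. u (Suc j) * D ^ j)) mod D = (v 0 + D * (\<Sum>j\<le>k. v (Suc j) * D ^ j)) mod D"
    using Suc.prems(3) eu ev by simp
  then have h0: "u 0 = v 0" using u0 by simp
  then have "D * (\<Sum>j\<le>k. u (Suc j) * D ^ j) = D * (\<Sum>j\<le>k. v (Suc j) * D ^ j)"
    using Suc.prems(3) eu ev by simp
  then have tl: "(\<Sum>j\<le>k. u (Suc j) * D ^ j) = (\<Sum>j\<le>k. v (Suc j) * D ^ j)" using assms by simp
  show ?case
  proof (cases j)
    case 0 then show ?thesis using h0 by simp
  next
    case (Suc j')
    have "u (Suc j') = v (Suc j')"
      by (rule Suc.IH[of "\<lambda>j. u (Suc j)" "\<lambda>j. v (Suc j)"]) (use Suc.prems tl Suc in auto)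
    then show ?thesis using Suc by simp
  qed
qed

lemma sum_distinct_degree:
  fixes t :: "'x \<Rightarrow> 'b::comm_ring_1 poly"
  assumes fin: "finite S" and ne: "S \<noteq> {}" and nz: "\<forall>s\<in>S. t s \<noteq> 0"
    and inj: "inj_on (\<lambda>s. degree (t s)) S"
  shows "\<exists>s\<in>S. lead_coeff (sum t S) = lead_coeff (t s)"
proof -
  define M where "M = Max ((\<lambda>s. degree (t s)) ` S)"
  have "M \<in> (\<lambda>s. degree (t s)) ` S" unfolding M_def using fin ne by (intro Max_in) auto
  then obtain s0 where s0: "s0 \<in> S" "degree (t s0) = M" by auto
  have le: "degree (t s) \<le> M" if "s \<in> S" for s unfolding M_def using fin that by (intro Max_ge) auto
  have lt: "degree (t s) < M" if "s \<in> S" "s \<noteq> s0" for s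
    using le[OF that(1)] inj s0 that unfolding inj_on_def by (metis le_neq_implies_less)
  have cM: "coeff (sum t S) M = lead_coeff (t s0)"
  proof -
    have "coeff (sum t S) M = (\<Sum>s\<in>S. coeff (t s) M)" by (simp add: coeff_sum)
    also have "\<dots> = coeff (t s0) M + (\<Sum>s\<in>S - {s0}. coeff (t s) M)"
      by (rule sum.remove[OF fin s0(1)])
    also have "(\<Sum>s\<in>S - {s0}. coeff (t s) M) = 0"
      using lt by (intro sum.neutral) (auto intro: coeff_eq_0)
    finally show ?thesis using s0 by simp
  qed
  have "\<forall>i>M. coeff (sum t S) i = 0"
    using le by (auto simp: coeff_sum intro!: sum.neutral coeff_eq_0 dest: le)
  then have "degree (sum t S) \<le> M" by (rule degree_le)
  moreover have "coeff (sum t S) M \<noteq> 0" using cM nz s0 by (metis leading_coeff_0_iff)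
  ultimately have "degree (sum t S) = M" using le_degree by (metis antisym)
  then have "lead_coeff (sum t S) = lead_coeff (t s0)" using cM s0 by simp
  then show ?thesis using s0 by blast
qed


definition nD :: "'a::comm_ring_1 mpoly \<Rightarrow> nat" where
  "nD f = Suc (\<Sum>m\<in>keys f. \<Sum>i\<in>keys m. lookup m i)"

lemma nD_gt: assumes "m \<in> keys f" shows "lookup m i < nD f"
proof (cases "i \<in> keys m")
  case True
  have "lookup m i \<le> (\<Sum>i\<in>keys m. lookup m i)" using True by (intro member_le_sum) auto
  also have "\<dots> \<le> (\<Sum>m\<in>keys f. \<Sum>i\<in>keys m. lookup m i)"
    using assms by (intro member_le_sum[of m "keys f" "\<lambda>m. \<Sum>i\<in>keys m. lookup m i"]) auto
  finally show ?thesis unfolding nD_def by simp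
next
  case False
  then show ?thesis by (simp add: nD_def in_keys_iff)
qed

definition ew :: "'a::comm_ring_1 mpoly \<Rightarrow> nat \<Rightarrow> nat" where
  "ew f i = nD f ^ Suc i"

definition bn :: "nat \<Rightarrow> 'a::comm_ring_1 mpoly \<Rightarrow> nat \<Rightarrow> 'a mpoly" where
  "bn n f i = (if i < n then X i + X n ^ ew f i else X i)"

definition bn' :: "nat \<Rightarrow> 'a::comm_ring_1 mpoly \<Rightarrow> nat \<Rightarrow> 'a mpoly" where
  "bn' n f i = (if i < n then X i - X n ^ ew f i else X i)"

definition nag :: "nat \<Rightarrow> 'a::comm_ring_1 mpoly \<Rightarrow> 'a mpoly \<Rightarrow> 'a mpoly" where
  "nag n f = gev const_poly (bn n f)"

definition nag' :: "nat \<Rightarrow> 'a::comm_ring_1 mpoly \<Rightarrow> 'a mpoly \<Rightarrow> 'a mpoly" where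
  "nag' n f = gev const_poly (bn' n f)"

lemma hom_nag: "hom (nag n f)" unfolding nag_def by (rule hom_gev[OF hom_const])
lemma hom_nag': "hom (nag' n f)" unfolding nag'_def by (rule hom_gev[OF hom_const])

lemma nag'_X: "nag' n f (X i) = bn' n f i" by (simp add: nag'_def hom_const)
lemma nag'_const [simp]: "nag' n f (const_poly c) = const_poly c" by (simp add: nag'_def hom_const)

lemma nag_inv: assumes "p \<in> polys (Suc n)" shows "nag' n f (nag n f p) = p"
proof -
  have "nag' n f (nag n f p) = gev (\<lambda>c. nag' n f (const_poly c)) (\<lambda>i. nag' n f (bn n f i)) p"
    unfolding nag_def by (rule gev_comp[OF hom_const hom_nag'])
  also have "\<dots> = gev const_poly (\<lambda>i. nag' n f (bn n f i)) p" by simp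
  also have "\<dots> = gev const_poly X p"
  proof (rule gev_local[OF hom_const assms])
    fix i assume "i < Suc n"
    then show "nag' n f (bn n f i) = X i"
      by (auto simp: bn_def bn'_def nag'_X hom_add[OF hom_nag'] hom_power[OF hom_nag'])
  qed
  finally show ?thesis by (simp add: gev_expansion)
qed

lemma nag_polys: "p \<in> polys (Suc n) \<Longrightarrow> nag n f p \<in> polys (Suc n)"
  unfolding nag_def
  by (rule gev_polys) (auto simp: bn_def intro!: polys_add polys_power polys_X)

lemma nag'_polys: "p \<in> polys (Suc n) \<Longrightarrow> nag' n f p \<in> polys (Suc n)"
  unfolding nag'_def
  by (rule gev_polys) (auto simp: bn'_def intro!: polys_diff polys_power polys_X)

lemma eval_nag: "eval_mpoly b (nag n f p) = eval_mpoly (\<lambda>i. if i < n then b i + b n ^ ew f i else b i) p"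
proof -
  have "eval_mpoly b (nag n f p) = gev (\<lambda>c. eval_mpoly b (const_poly c)) (\<lambda>i. eval_mpoly b (bn n f i)) p"
    unfolding nag_def by (rule gev_comp[OF hom_const hom_eval])
  also have "\<dots> = gev (\<lambda>c. c) (\<lambda>i. if i < n then b i + b n ^ ew f i else b i) p"
    by (intro arg_cong2[where f="\<lambda>x y. gev x y p"]) (auto simp: bn_def fun_eq_iff)
  finally show ?thesis by (simp add: eval_gev)
qed


lemma Phi_bn_monic:
  fixes f :: "'a::idom mpoly"
  assumes "i < Suc n"
  shows "lead_coeff (Phi n (bn n f i)) = 1 \<and> degree (Phi n (bn n f i)) = (if i < n then ew f i else 1)"
proof (cases "i < n")
  case True
  have e: "ew f i > 0" unfolding ew_def nD_def by simp
  have eq: "Phi n (bn n f i) = [:X i:] + monom 1 (ew f i)"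
    using True by (simp add: bn_def hom_add[OF hom_Phi] hom_power[OF hom_Phi] Phi_X Phi_Xn monom_altdef)
  have "degree ([:X i:] + monom (1::'a mpoly) (ew f i)) = ew f i"
    using e by (subst degree_add_eq_right) (auto simp: degree_monom_eq)
  moreover have "coeff ([:X i:] + monom (1::'a mpoly) (ew f i)) (ew f i) = 1"
    using e by (simp add: coeff_pCons split: nat.splits)
  ultimately show ?thesis using True eq by simp
next
  case False
  then have "i = n" using assms by simp
  then show ?thesis by (simp add: bn_def Phi_Xn)
qed

lemma Phi_nag:
  "Phi n (nag n f p) = (\<Sum>m\<in>keys p. [:const_poly (lookup p m):] * mono (\<lambda>i. Phi n (bn n f i)) m)"
proof -
  have "Phi n (nag n f p) = gev (\<lambda>c. Phi n (const_poly c)) (\<lambda>i. Phi n (bn n f i)) p"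
    unfolding nag_def by (rule gev_comp[OF hom_const hom_Phi])
  then show ?thesis by (simp add: gev_def)
qed

lemma weight_digits:
  fixes m :: "nat \<Rightarrow>\<^sub>0 nat" and D :: nat
  assumes "keys m \<subseteq> {..n}"
  shows "(\<Sum>i\<in>keys m. lookup m i * (if i < n then D ^ Suc i else 1)) =
         (\<Sum>j\<le>n. (if j = 0 then lookup m n else lookup m (j - 1)) * D ^ j)"
proof -
  have "(\<Sum>i\<in>keys m. lookup m i * (if i < n then D ^ Suc i else 1)) =
        (\<Sum>i\<le>n. lookup m i * (if i < n then D ^ Suc i else 1))"
    using assms by (intro sum.mono_neutral_left) (auto simp: in_keys_iff)
  also have "\<dots> = (\<Sum>i<n. lookup m i * D ^ Suc i) + lookup m n"
    by (simp add: lessThan_Suc_atMost[symmetric])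
  also have "\<dots> = (\<Sum>j\<le>n. (if j = 0 then lookup m n else lookup m (j - 1)) * D ^ j)"
    by (simp add: sum.atMost_shift)
  finally show ?thesis .
qed

lemma lead_nag:
  fixes f :: "'a::idom mpoly"
  assumes fP: "f \<in> polys (Suc n)" and f0: "f \<noteq> 0"
  shows "\<exists>m\<in>keys f. lead_coeff (Phi n (nag n f f)) = const_poly (lookup f m)"
proof -
  define B' where "B' = (\<lambda>i. Phi n (bn n f i))"
  define wd where "wd = (\<lambda>i. if i < n then ew f i else 1)"
  define t where "t = (\<lambda>m. [:const_poly (lookup f m):] * mono B' m)"
  have keysm: "keys m \<subseteq> {..n}" if "m \<in> keys f" for m
    using polys_memD[OF fP that] by (auto simp: less_Suc_eq_le)
  have B'nz: "B' i \<noteq> 0" if "i \<le> n" for i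
    using Phi_bn_monic[of i n f] that unfolding B'_def by auto
  have lc1: "lead_coeff (B' i) = 1" if "i \<le> n" for i
    using Phi_bn_monic[of i n f] that unfolding B'_def by auto
  have lm: "lead_coeff (mono B' m) = 1" if "m \<in> keys f" for m
    unfolding mono_def lead_coeff_prod lead_coeff_power
    using lc1 keysm[OF that] by (intro prod.neutral) (auto simp: subset_iff)
  have dm: "degree (mono B' m) = (\<Sum>i\<in>keys m. lookup m i * wd i)" if "m \<in> keys f" for m
    unfolding mono_def
    using keysm[OF that] B'nz Phi_bn_monic[of _ n f]
    by (subst degree_prod_sum_eq) (auto simp: degree_power_eq B'_def wd_def less_Suc_eq_le subset_iff intro!: sum.cong)
  have cnz: "const_poly (lookup f m) \<noteq> 0" if "m \<in> keys f" for m
    using that unfolding const_poly_def in_keys_iff by (metis lookup_single_eq lookup_zero)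
  have monz: "mono B' m \<noteq> 0" if "m \<in> keys f" for m using lm[OF that] by auto
  have tnz: "t m \<noteq> 0" if "m \<in> keys f" for m
    unfolding t_def using cnz[OF that] monz[OF that] by simp
  have lt: "lead_coeff (t m) = const_poly (lookup f m)" if "m \<in> keys f" for m
    unfolding t_def using lm[OF that] by (simp add: lead_coeff_mult)
  have dt: "degree (t m) = (\<Sum>i\<in>keys m. lookup m i * wd i)" if "m \<in> keys f" for m
    unfolding t_def using cnz[OF that] monz[OF that] dm[OF that] by (simp add: degree_mult_eq)
  have inj: "inj_on (\<lambda>m. degree (t m)) (keys f)"
  proof (rule inj_onI)
    fix m m' assume m: "m \<in> keys f" and m': "m' \<in> keys f" and eq: "degree (t m) = degree (t m')"
    define dg :: "(nat \<Rightarrow>\<^sub>0 nat) \<Rightarrow> nat \<Rightarrow> nat" where "dg = (\<lambda>m j. if j = 0 then lookup m n else lookup m (j - 1))"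
    have "(\<Sum>j\<le>n. dg m j * nD f ^ j) = (\<Sum>j\<le>n. dg m' j * nD f ^ j)"
      using eq dt[OF m] dt[OF m'] weight_digits[OF keysm[OF m], of "nD f"]
        weight_digits[OF keysm[OF m'], of "nD f"]
      unfolding dg_def wd_def ew_def by simp
    then have dgeq: "dg m j = dg m' j" if "j \<le> n" for j
      using digits_unique[of "nD f" n "dg m" "dg m'" j] that nD_gt[OF m] nD_gt[OF m']
      unfolding dg_def by (simp add: nD_def)
    show "m = m'"
    proof (rule poly_mapping_eqI)
      fix i
      show "lookup m i = lookup m' i"
      proof (cases "i \<le> n")
        case True
        show ?thesis
        proof (cases "i = n")
          case True then show ?thesis using dgeq[of 0] unfolding dg_def by simp
        next
          case False then show ?thesis using dgeq[of "Suc i"] \<open>i \<le> n\<close> unfolding dg_def by simp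
        qed
      next
        case False
        then have "i \<notin> keys m" "i \<notin> keys m'" using keysm[OF m] keysm[OF m'] by auto
        then show ?thesis by (simp add: in_keys_iff)
      qed
    qed
  qed
  have "keys f \<noteq> {}" using f0 by simp
  from sum_distinct_degree[OF finite_keys this _ inj] tnz
  obtain m where "m \<in> keys f" "lead_coeff (sum t (keys f)) = lead_coeff (t m)" by blast
  moreover have "Phi n (nag n f f) = sum t (keys f)" unfolding t_def B'_def by (rule Phi_nag)
  ultimately show ?thesis using lt by auto
qed


lemma polys0: assumes "p \<in> polys 0" shows "p = const_poly (lookup p 0)"
proof (rule poly_mapping_eqI)
  fix k
  show "lookup p k = lookup (const_poly (lookup p 0)) k"
  proof (cases "k = 0")
    case True then show ?thesis by (simp add: const_poly_def)
  next
    case False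
    then obtain i where "i \<in> keys k" by (metis all_not_in_conv keys_eq_empty)
    then have "k \<notin> keys p" using polys_memD[OF assms] by blast
    then show ?thesis using False by (simp add: const_poly_def in_keys_iff lookup_single)
  qed
qed

lemma const_mult: "const_poly (a * b) = const_poly a * const_poly b"
  by (rule hom_mult[OF hom_const])

theorem weak_ns:
  fixes I :: "'a::idom mpoly set"
  assumes field: "\<forall>x::'a. x \<noteq> 0 \<longrightarrow> (\<exists>y. x * y = 1)"
    and closed: "\<forall>p::'a poly. degree p > 0 \<longrightarrow> (\<exists>x. poly p x = 0)"
  shows "is_ideal n I \<Longrightarrow> 1 \<notin> I \<Longrightarrow> \<exists>a\<in>points n. \<forall>p\<in>I. eval_mpoly a p = 0"
proof (induction n arbitrary: I)
  case 0
  have "eval_mpoly (\<lambda>_. 0) p = 0" if "p \<in> I" for p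
  proof (rule ccontr)
    have pP: "p \<in> polys 0" using that ideal_sub[OF "0.prems"(1)] by blast
    define c where "c = lookup p 0"
    have pc: "p = const_poly c" unfolding c_def by (rule polys0[OF pP])
    assume "eval_mpoly (\<lambda>_. 0) p \<noteq> 0"
    then have "c \<noteq> 0" using pc by simp
    then obtain u where "c * u = 1" using field by blast
    then have "const_poly u * p = 1" using pc const_mult[of u c] by (simp add: mult.commute)
    moreover have "const_poly u * p \<in> I" using ideal_mult[OF "0.prems"(1) polys_const that] .
    ultimately show False using "0.prems"(2) by simp
  qed
  moreover have "(\<lambda>_. 0) \<in> points 0" by (simp add: points_def)
  ultimately show ?case by blast
next
  case (Suc n)
  note I = Suc.prems(1)
  have IP: "I \<subseteq> polys (Suc n)" by (rule ideal_sub[OF I])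
  show ?case
  proof (cases "\<forall>f\<in>I. f = 0")
    case True
    then show ?thesis by (intro bexI[of _ "\<lambda>_. 0"]) (auto simp: points_def)
  next
    case False
    then obtain f where fI: "f \<in> I" and f0: "f \<noteq> 0" by blast
    have fP: "f \<in> polys (Suc n)" using fI IP by blast
    define I2 where "I2 = {q \<in> polys (Suc n). nag' n f q \<in> I}"
    have I2: "is_ideal (Suc n) I2"
      unfolding is_ideal_def
    proof (intro conjI ballI)
      show "I2 \<subseteq> polys (Suc n)" unfolding I2_def by blast
      show "0 \<in> I2" unfolding I2_def using ideal_0[OF I] by (simp add: hom_zero[OF hom_nag'])
    next
      fix p q assume "p \<in> I2" "q \<in> I2"
      then show "p - q \<in> I2" unfolding I2_def
        by (auto simp: hom_diff[OF hom_nag'] intro: polys_diff ideal_diff[OF I])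
    next
      fix p q :: "'a mpoly" assume p: "p \<in> polys (Suc n)" and "q \<in> I2"
      then show "p * q \<in> I2" unfolding I2_def
        by (auto simp: hom_mult[OF hom_nag'] intro: polys_mult ideal_mult[OF I] nag'_polys)
    qed
    have one2: "1 \<notin> I2" unfolding I2_def using Suc.prems(2) by (simp add: hom_one[OF hom_nag'])
    have nagI2: "nag n f p \<in> I2" if "p \<in> I" for p
      unfolding I2_def using that IP nag_inv nag_polys by fastforce
    obtain m where m: "m \<in> keys f" "lead_coeff (Phi n (nag n f f)) = const_poly (lookup f m)"
      using lead_nag[OF fP f0] by blast
    have "lookup f m \<noteq> 0" using m(1) by (simp add: in_keys_iff)
    then obtain u where u: "lookup f m * u = 1" using field by blast
    define g where "g = const_poly u * nag n f f"
    have gI2: "g \<in> I2" unfolding g_def using ideal_mult[OF I2 polys_const nagI2[OF fI]] .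
    have "lead_coeff (Phi n g) = const_poly u * const_poly (lookup f m)"
      unfolding g_def using m(2) by (simp add: hom_mult[OF hom_Phi] lead_coeff_mult)
    also have "\<dots> = 1" using u const_mult[of u "lookup f m"] by (simp add: mult.commute)
    finally have lg: "lead_coeff (Phi n g) = 1" .
    define I' where "I' = I2 \<inter> polys n"
    have I': "is_ideal n I'"
      unfolding is_ideal_def I'_def
    proof (intro conjI ballI)
      fix p q :: "'a mpoly" assume "p \<in> polys n" "q \<in> I2 \<inter> polys n"
      then show "p * q \<in> I2 \<inter> polys n"
        using ideal_mult[OF I2 polys_Suc[of p n], of q] by (auto intro: polys_mult)
    qed (use ideal_0[OF I2] ideal_diff[OF I2] in \<open>auto intro: polys_diff\<close>)
    have "1 \<notin> I'" using one2 unfolding I'_def by blast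
    from Suc.IH[OF I' this] obtain a where a: "a \<in> points n" "\<forall>p\<in>I'. eval_mpoly a p = 0" by blast
    from monic_case[OF field closed I2 gI2 lg] a(2)
    obtain b where b: "\<forall>q\<in>I2. eval_mpoly (a(n := b)) q = 0" unfolding I'_def by blast
    define c where "c = a(n := b)"
    define c' where "c' = (\<lambda>i. if i < n then c i + c n ^ ew f i else c i)"
    have "c' \<in> points (Suc n)" using a(1) unfolding c'_def c_def points_def by auto
    moreover have "\<forall>p\<in>I. eval_mpoly c' p = 0"
      using b nagI2 eval_nag[of c n f] unfolding c'_def c_def by metis
    ultimately show ?thesis by blast
  qed
qed


lemma gen_ideal_iff: "x \<in> gen_ideal n gs \<longleftrightarrow>
   (\<exists>c. (\<forall>i<length gs. c i \<in> polys n) \<and> x = (\<Sum>i<length gs. c i * gs ! i))"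
proof
  assume "x \<in> gen_ideal n gs"
  then obtain qs where "length qs = length gs" "set qs \<subseteq> polys n" "x = (\<Sum>i<length gs. qs ! i * gs ! i)"
    unfolding gen_ideal_def by blast
  then show "\<exists>c. (\<forall>i<length gs. c i \<in> polys n) \<and> x = (\<Sum>i<length gs. c i * gs ! i)"
    by (intro exI[of _ "(!) qs"]) (auto simp: subset_iff)
next
  assume "\<exists>c. (\<forall>i<length gs. c i \<in> polys n) \<and> x = (\<Sum>i<length gs. c i * gs ! i)"
  then obtain c where c: "\<forall>i<length gs. c i \<in> polys n" "x = (\<Sum>i<length gs. c i * gs ! i)" by blast
  define qs where "qs = map c [0..<length gs]"
  have "length qs = length gs" "set qs \<subseteq> polys n" "x = (\<Sum>i<length gs. qs ! i * gs ! i)"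
    using c unfolding qs_def by auto
  then show "x \<in> gen_ideal n gs" unfolding gen_ideal_def by blast
qed

lemma gen_ideal_ideal: fixes gs :: "'a::comm_ring_1 mpoly list" assumes "set gs \<subseteq> polys n" shows "is_ideal n (gen_ideal n gs)"
  unfolding is_ideal_def
proof (intro conjI ballI subsetI)
  fix x assume "x \<in> gen_ideal n gs"
  then obtain c where "\<forall>i<length gs. c i \<in> polys n" "x = (\<Sum>i<length gs. c i * gs ! i)"
    unfolding gen_ideal_iff by blast
  then show "x \<in> polys n" using assms by (auto intro!: polys_sum polys_mult)
next
  show "0 \<in> gen_ideal n gs" unfolding gen_ideal_iff by (intro exI[of _ "\<lambda>_. 0"]) auto
next
  fix x y :: "'a mpoly" assume "x \<in> gen_ideal n gs" "y \<in> gen_ideal n gs"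
  then obtain c d where "\<forall>i<length gs. c i \<in> polys n" "x = (\<Sum>i<length gs. c i * gs ! i)"
     "\<forall>i<length gs. d i \<in> polys n" "y = (\<Sum>i<length gs. d i * gs ! i)"
    unfolding gen_ideal_iff by blast
  then show "x - y \<in> gen_ideal n gs" unfolding gen_ideal_iff
    by (intro exI[of _ "\<lambda>i. c i - d i"]) (auto simp: sum_subtractf algebra_simps intro: polys_diff)
next
  fix p y :: "'a mpoly" assume p: "p \<in> polys n" and "y \<in> gen_ideal n gs"
  then obtain d where "\<forall>i<length gs. d i \<in> polys n" "y = (\<Sum>i<length gs. d i * gs ! i)"
    unfolding gen_ideal_iff by blast
  then show "p * y \<in> gen_ideal n gs" unfolding gen_ideal_iff using p
    by (intro exI[of _ "\<lambda>i. p * d i"]) (auto simp: sum_distrib_left mult.assoc intro: polys_mult)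
qed

lemma gen_ideal_gen: assumes "i < length gs" shows "gs ! i \<in> gen_ideal n gs"
  unfolding gen_ideal_iff
proof (intro exI[of _ "\<lambda>j. if j = i then 1 else 0"] conjI allI impI)
  show "gs ! i = (\<Sum>j<length gs. (if j = i then 1 else 0) * gs ! j)"
  proof -
    have "(\<Sum>j<length gs. (if j = i then 1 else 0) * gs ! j) = (\<Sum>j<length gs. if j = i then gs ! j else 0)"
      by (intro sum.cong) auto
    then show ?thesis using assms by simp
  qed
qed auto

lemma gen_ideal_vanish:
  assumes "\<forall>i<length gs. eval_mpoly a (gs ! i) = 0" "x \<in> gen_ideal n gs"
  shows "eval_mpoly a x = 0"
  using assms unfolding gen_ideal_iff by auto

lemma Phi_decomp_le: assumes "p \<in> polys (Suc n)" "degree (Phi n p) \<le> N"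
  shows "p = (\<Sum>k\<le>N. coeff (Phi n p) k * X n ^ k)"
proof -
  have "p = (\<Sum>k\<le>degree (Phi n p). coeff (Phi n p) k * X n ^ k)" by (rule Phi_decomp[OF assms(1)])
  also have "\<dots> = (\<Sum>k\<le>N. coeff (Phi n p) k * X n ^ k)"
    using assms(2) by (intro sum.mono_neutral_left) (auto simp: coeff_eq_0)
  finally show ?thesis .
qed


theorem strong_ns:
  fixes gs :: "'a::idom mpoly list"
  assumes field: "\<forall>x::'a. x \<noteq> 0 \<longrightarrow> (\<exists>y. x * y = 1)"
    and closed: "\<forall>p::'a poly. degree p > 0 \<longrightarrow> (\<exists>x. poly p x = 0)"
    and gs: "set gs \<subseteq> polys n" and pP: "p \<in> polys n"
    and van: "\<forall>a\<in>zero_set n (gen_ideal n gs). eval_mpoly a p = 0"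
  shows "\<exists>k. p ^ k \<in> gen_ideal n gs"
proof (cases "p = 0")
  case True
  then show ?thesis using ideal_0[OF gen_ideal_ideal[OF gs]] by (intro exI[of _ 1]) simp
next
  case p0: False
  define L where "L = length gs"
  define z where "z = 1 - X n * p"
  define hs where "hs = gs @ [z]"
  have pP': "p \<in> polys (Suc n)" using pP by (rule polys_Suc)
  have zP: "z \<in> polys (Suc n)" unfolding z_def using pP' by (auto intro!: polys_diff polys_mult polys_X)
  have hsP: "set hs \<subseteq> polys (Suc n)" unfolding hs_def using gs zP polys_Suc by auto
  have J: "is_ideal (Suc n) (gen_ideal (Suc n) hs)" by (rule gen_ideal_ideal[OF hsP])
  have "1 \<in> gen_ideal (Suc n) hs"
  proof (rule ccontr)
    assume "1 \<notin> gen_ideal (Suc n) hs"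
    from weak_ns[OF field closed J this] obtain a where
      a: "a \<in> points (Suc n)" "\<forall>q\<in>gen_ideal (Suc n) hs. eval_mpoly a q = 0" by blast
    define a' where "a' = a(n := 0)"
    have a'P: "a' \<in> points n" using a(1) unfolding a'_def points_def by auto
    have ag: "eval_mpoly a' (gs ! i) = 0" if "i < L" for i
    proof -
      have "hs ! i = gs ! i" using that unfolding hs_def L_def by (simp add: nth_append)
      moreover have "hs ! i \<in> gen_ideal (Suc n) hs" using that unfolding hs_def L_def
        by (intro gen_ideal_gen) simp
      ultimately have "eval_mpoly a (gs ! i) = 0" using a(2) by metis
      moreover have "gs ! i \<in> polys n" using gs that unfolding L_def by auto
      ultimately show ?thesis using eval_local[of "gs ! i" n a' a] unfolding a'_def by simp
    qed
    have "a' \<in> zero_set n (gen_ideal n gs)"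
      unfolding zero_set_def using a'P ag gen_ideal_vanish[of gs a'] unfolding L_def by blast
    then have "eval_mpoly a' p = 0" using van by blast
    then have "eval_mpoly a p = 0" using eval_local[OF pP, of a' a] unfolding a'_def by simp
    then have "eval_mpoly a z = 1" unfolding z_def by simp
    moreover have "eval_mpoly a z = 0"
    proof -
      have "hs ! L = z" unfolding hs_def L_def by simp
      moreover have "hs ! L \<in> gen_ideal (Suc n) hs" unfolding hs_def L_def
        by (intro gen_ideal_gen) simp
      ultimately show ?thesis using a(2) by metis
    qed
    ultimately show False by simp
  qed
  then obtain c where c: "\<forall>i<length hs. c i \<in> polys (Suc n)" "1 = (\<Sum>i<length hs. c i * hs ! i)"
    unfolding gen_ideal_iff by blast
  have one: "1 = (\<Sum>i<L. c i * gs ! i) + c L * z"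
    using c(2) unfolding hs_def L_def by (simp add: nth_append)
  have cP: "c i \<in> polys (Suc n)" if "i \<le> L" for i using c(1) that unfolding hs_def L_def by auto
  define N where "N = (\<Sum>i<L. degree (Phi n (c i)))"
  define y where "y = X n * p"
  define co where "co = (\<lambda>i k. coeff (Phi n (c i)) k)"
  define G where "G = (\<lambda>k. \<Sum>j<k. y ^ j)"
  define c' where "c' = (\<lambda>i. \<Sum>k\<le>N. co i k * p ^ (N - k))"
  define S where "S = (\<lambda>i. \<Sum>k\<le>N. co i k * p ^ (N - k) * G k)"
  have c'R: "c' i \<in> polys n" if "i < L" for i
    unfolding c'_def co_def using cP[of i] that
    by (auto intro!: polys_sum polys_mult polys_power Phi_coeff pP)
  have dec: "p ^ N * c i = c' i - z * S i" if "i < L" for i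
  proof -
    have "degree (Phi n (c i)) \<le> N" unfolding N_def using that by (intro member_le_sum) auto
    moreover have "i \<le> L" using that by simp
    ultimately have ci: "c i = (\<Sum>k\<le>N. co i k * X n ^ k)" unfolding co_def
      using Phi_decomp_le[OF cP] by blast
    have "p ^ N * c i = (\<Sum>k\<le>N. co i k * p ^ (N - k) * y ^ k)"
    proof -
      have "p ^ N * c i = (\<Sum>k\<le>N. co i k * (p ^ N * X n ^ k))"
        by (subst ci) (simp add: sum_distrib_left mult_ac)
      also have "\<dots> = (\<Sum>k\<le>N. co i k * p ^ (N - k) * y ^ k)"
      proof (intro sum.cong refl)
        fix k assume "k \<in> {..N}"
        then have "p ^ N = p ^ (N - k) * p ^ k" by (simp add: power_add[symmetric])
        then show "co i k * (p ^ N * X n ^ k) = co i k * p ^ (N - k) * y ^ k"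
          unfolding y_def by (simp add: power_mult_distrib mult_ac)
      qed
      finally show ?thesis .
    qed
    also have "\<dots> = (\<Sum>k\<le>N. co i k * p ^ (N - k) * (1 - z * G k))"
    proof (intro sum.cong refl)
      fix k
      have "1 - y ^ k = (1 - y) * G k" unfolding G_def by (rule one_diff_power_eq)
      then have "y ^ k = 1 - z * G k" unfolding z_def y_def by (simp add: algebra_simps)
      then show "co i k * p ^ (N - k) * y ^ k = co i k * p ^ (N - k) * (1 - z * G k)" by simp
    qed
    also have "\<dots> = c' i - z * S i"
      unfolding c'_def S_def by (simp add: algebra_simps sum_subtractf sum_distrib_left)
    finally show ?thesis .
  qed
  define T where "T = p ^ N * c L - (\<Sum>i<L. S i * gs ! i)"
  define r where "r = p ^ N - (\<Sum>i<L. c' i * gs ! i)"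
  have "p ^ N = p ^ N * 1" by simp
  also have "\<dots> = (\<Sum>i<L. (p ^ N * c i) * gs ! i) + p ^ N * c L * z"
    by (subst one) (simp add: algebra_simps sum_distrib_left)
  also have "\<dots> = (\<Sum>i<L. (c' i - z * S i) * gs ! i) + p ^ N * c L * z"
    using dec by simp
  also have "\<dots> = (\<Sum>i<L. c' i * gs ! i) + z * T"
    unfolding T_def by (simp add: algebra_simps sum_subtractf sum_distrib_left)
  finally have rz: "r = z * T" unfolding r_def by simp
  have rR: "r \<in> polys n" unfolding r_def using c'R gs unfolding L_def
    by (auto intro!: polys_diff polys_power pP polys_sum polys_mult)
  have Pz: "Phi n z = [:1, - p:]"
    unfolding z_def using Phi_R[OF pP]
    by (simp add: hom_diff[OF hom_Phi] hom_mult[OF hom_Phi] hom_one[OF hom_Phi] Phi_Xn one_pCons)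
  have "[:r:] = [:1, - p:] * Phi n T" using rz Phi_R[OF rR] Pz by (simp add: hom_mult[OF hom_Phi])
  moreover have "Phi n T = 0"
  proof (rule ccontr)
    assume T0: "Phi n T \<noteq> 0"
    have "degree ([:1, - p:] * Phi n T) = 1 + degree (Phi n T)"
      using T0 p0 by (subst degree_mult_eq) auto
    then show False using \<open>[:r:] = [:1, - p:] * Phi n T\<close> by (metis degree_pCons_0 add_is_0 one_neq_zero)
  qed
  ultimately have "r = 0" by simp
  then have "p ^ N = (\<Sum>i<L. c' i * gs ! i)" unfolding r_def by simp
  then have "p ^ N \<in> gen_ideal n gs" unfolding gen_ideal_iff L_def using c'R unfolding L_def by blast
  then show ?thesis by blast
qed


lemma prime_pow_mem:
  assumes J: "is_ideal n J" and D: "quotient_is_domain n J" and pP: "p \<in> polys n"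
  shows "p ^ k \<in> J \<Longrightarrow> p \<in> J"
proof (induction k)
  case 0
  then have "q \<in> J" if "q \<in> polys n" for q using ideal_mult[OF J that, of 1] by simp
  then have "J = polys n" using ideal_sub[OF J] by blast
  then show ?case using D unfolding quotient_is_domain_def by blast
next
  case (Suc k)
  then show ?case using D pP polys_power[OF pP, of k] unfolding quotient_is_domain_def by auto
qed

lemma rad_sub_Trad: assumes "I \<subseteq> polys n" shows "radical n I \<subseteq> T_radical n I"
  unfolding radical_def T_radical_def using prime_pow_mem by blast

lemma Trad_sub_V:
  fixes I :: "'a::idom mpoly set"
  assumes IP: "I \<subseteq> polys n"
  shows "T_radical n I \<subseteq> vanishing_ideal n (zero_set n I)"
proof
  fix p assume p: "p \<in> T_radical n I"
  have "eval_mpoly a p = 0" if a: "a \<in> zero_set n I" for a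
  proof -
    define J where "J = {q \<in> polys n. eval_mpoly a q = 0}"
    have "is_ideal n J" unfolding J_def is_ideal_def by (auto intro: polys_diff polys_mult)
    moreover have "I \<subseteq> J" using IP a unfolding J_def zero_set_def by auto
    moreover have "quotient_is_domain n J"
    proof -
      have "1 \<notin> J" unfolding J_def by simp
      then have "J \<noteq> polys n" using polys_one[of n] by blast
      then show ?thesis unfolding quotient_is_domain_def J_def by auto
    qed
    moreover have "\<forall>c. const_poly c \<in> J \<longrightarrow> c = 0" unfolding J_def by auto
    ultimately have "p \<in> J" using p unfolding T_radical_def by blast
    then show ?thesis unfolding J_def by blast
  qed
  then show "p \<in> vanishing_ideal n (zero_set n I)"
    using p unfolding vanishing_ideal_def T_radical_def by blast
qed

lemma V_eq_rad:
  fixes I :: "'a::idom mpoly set"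
  assumes AC: "alg_closed_field TYPE('a)" and fg: "fin_gen_ideal n I"
  shows "vanishing_ideal n (zero_set n I) = radical n I"
proof -
  obtain gs where gs: "set gs \<subseteq> polys n" "I = gen_ideal n gs" using fg unfolding fin_gen_ideal_def by blast
  have field: "\<forall>x::'a. x \<noteq> 0 \<longrightarrow> (\<exists>y. x * y = 1)" and closed: "\<forall>p::'a poly. degree p > 0 \<longrightarrow> (\<exists>x. poly p x = 0)"
    using AC unfolding alg_closed_field_def by blast+
  show ?thesis
  proof
    show "vanishing_ideal n (zero_set n I) \<subseteq> radical n I"
      using strong_ns[OF field closed gs(1)] gs(2) unfolding vanishing_ideal_def radical_def by blast
  next
    show "radical n I \<subseteq> vanishing_ideal n (zero_set n I)"
    proof
      fix p assume "p \<in> radical n I"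
      then obtain k where k: "p \<in> polys n" "p ^ k \<in> I" unfolding radical_def by blast
      have "eval_mpoly a p = 0" if "a \<in> zero_set n I" for a
      proof -
        have "eval_mpoly a (p ^ k) = 0" using that k(2) unfolding zero_set_def by blast
        moreover have "k \<noteq> 0"
        proof
          assume "k = 0"
          then have "eval_mpoly a 1 = 0" using \<open>eval_mpoly a (p ^ k) = 0\<close> by simp
          then show False by simp
        qed
        ultimately show ?thesis by simp
      qed
      then show "p \<in> vanishing_ideal n (zero_set n I)" using k unfolding vanishing_ideal_def by blast
    qed
  qed
qed


lemma not_ac_poly:
  assumes "\<not> alg_closed_field TYPE('a::idom)"
  shows "\<exists>q::'a poly. degree q > 0 \<and> (\<forall>x. poly q x \<noteq> 0)"
proof (cases "\<forall>x::'a. x \<noteq> 0 \<longrightarrow> (\<exists>y. x * y = 1)")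
  case True
  then show ?thesis using assms unfolding alg_closed_field_def by blast
next
  case False
  then obtain x :: 'a where x: "x \<noteq> 0" "\<forall>y. x * y \<noteq> 1" by blast
  have "degree [:-1, x:] > 0" using x by simp
  moreover have "poly [:-1, x:] y \<noteq> 0" for y
  proof -
    have "poly [:-1, x:] y = x * y - 1" by (simp add: algebra_simps)
    then show ?thesis using x(2)[rule_format, of y] by (simp add: mult.commute)
  qed
  ultimately show ?thesis by blast
qed

definition psi :: "'a::idom mpoly \<Rightarrow> 'a fract poly" where
  "psi = gev (\<lambda>c. [:to_fract c:]) (\<lambda>i. [:0, 1:])"

lemma hom_to_fract: "hom to_fract" by (rule homI) simp_all

lemma hom_psi: "hom psi"
  unfolding psi_def by (rule hom_gev[OF hom_comp[OF hom_to_fract hom_pCons]])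

lemma psi_const [simp]: "psi (const_poly c) = [:to_fract c:]"
  unfolding psi_def by (simp add: gev_const[OF hom_comp[OF hom_to_fract hom_pCons]])

lemma psi_L: "psi (L 0 q) = fract_poly q"
proof -
  have "psi (L 0 q) = poly (map_poly psi (map_poly const_poly q)) (psi (X 0))"
    unfolding L_def by (rule hom_poly_comm[OF hom_psi])
  also have "psi (X 0) = [:0, 1:]"
    unfolding psi_def by (simp add: gev_X[OF hom_comp[OF hom_to_fract hom_pCons]])
  also have "map_poly psi (map_poly const_poly q) = map_poly (\<lambda>c. [:c:]) (fract_poly q)"
    by (simp add: map_poly_map_poly hom_zero[OF hom_psi] o_def)
  finally show ?thesis by (simp add: poly_const_X)
qed

lemma counter:
  fixes q :: "'a::idom poly"
  assumes dq: "degree q > 0" and nr: "\<forall>x. poly q x \<noteq> 0"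
  shows "\<exists>I::'a mpoly set. fin_gen_ideal 1 I \<and> vanishing_ideal 1 (zero_set 1 I) \<noteq> radical 1 I \<and>
           vanishing_ideal 1 (zero_set 1 I) \<noteq> T_radical 1 I"
proof -
  define Q where "Q = L 0 q"
  have QP: "Q \<in> polys 1" unfolding Q_def using L_polys[of 0 q] by simp
  define I where "I = gen_ideal 1 [Q]"
  have fg: "fin_gen_ideal 1 I" unfolding fin_gen_ideal_def I_def using QP
    by (intro exI[of _ "[Q]"]) auto
  have Iid: "is_ideal 1 I" unfolding I_def by (rule gen_ideal_ideal) (use QP in auto)
  have QI: "Q \<in> I" unfolding I_def using gen_ideal_gen[of 0 "[Q]" 1] by simp
  have Z: "zero_set 1 I = {}"
  proof (rule ccontr)
    assume "zero_set 1 I \<noteq> {}"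
    then obtain a where "a \<in> zero_set 1 I" by blast
    then have "eval_mpoly a Q = 0" using QI unfolding zero_set_def by blast
    moreover have "eval_mpoly a Q = poly q (a 0)"
      using spec_eval[of Q 0 a "a 0"] QP spec_L[of 0 a q] unfolding Q_def by simp
    ultimately show False using nr by simp
  qed
  have V: "1 \<in> vanishing_ideal 1 (zero_set 1 I)" unfolding Z vanishing_ideal_def by simp
  have fq0: "fract_poly q \<noteq> 0" using dq by auto
  have dfq: "degree (fract_poly q) = degree q" by (rule degree_map_poly) simp
  have "\<not> is_unit (fract_poly q)" using is_unit_iff_degree[OF fq0] dfq dq by simp
  obtain r where r0: "r dvd fract_poly q \<and> degree r > 0"
    and rmin: "\<forall>s. s dvd fract_poly q \<and> degree s > 0 \<longrightarrow> degree r \<le> degree s"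
    using ex_has_least_nat[of "\<lambda>s. s dvd fract_poly q \<and> degree s > 0" "fract_poly q" degree] dfq dq by auto
  have "irreducible r"
  proof (rule irreducibleI)
    show "r \<noteq> 0" using r0 by auto
    then show "\<not> r dvd 1" using is_unit_iff_degree[of r] r0 by simp
    fix a b assume ab: "r = a * b"
    show "a dvd 1 \<or> b dvd 1"
    proof (rule ccontr)
      assume "\<not> (a dvd 1 \<or> b dvd 1)"
      moreover have "a \<noteq> 0" "b \<noteq> 0" using ab \<open>r \<noteq> 0\<close> by auto
      ultimately have "degree a > 0" "degree b > 0" using is_unit_iff_degree by auto
      moreover have "degree r = degree a + degree b" using ab \<open>a \<noteq> 0\<close> \<open>b \<noteq> 0\<close> by (simp add: degree_mult_eq)
      moreover have "a dvd fract_poly q" using ab r0 by (metis dvd_mult_left)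
      ultimately show False using rmin by (metis add_le_same_cancel1 not_le)
    qed
  qed
  then have r: "r dvd fract_poly q" "prime_elem r" using r0 field_poly_irreducible_imp_prime by auto
  define J where "J = {g \<in> polys 1. r dvd psi g}"
  have rnu: "\<not> r dvd 1" using r(2) by (simp add: prime_elem_not_unit)
  have J: "is_ideal 1 J" unfolding J_def is_ideal_def
    by (auto simp: hom_zero[OF hom_psi] hom_diff[OF hom_psi] hom_mult[OF hom_psi] intro: polys_diff polys_mult)
  have IJ: "I \<subseteq> J"
  proof
    fix g assume "g \<in> I"
    then obtain c where c: "c 0 \<in> polys 1" "g = c 0 * Q" unfolding I_def gen_ideal_iff by auto
    have "psi g = psi (c 0) * fract_poly q" using c(2) unfolding Q_def by (simp add: hom_mult[OF hom_psi] psi_L)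
    then have "r dvd psi g" using r(1) by simp
    moreover have "g \<in> polys 1" using c QP by (auto intro: polys_mult)
    ultimately show "g \<in> J" unfolding J_def by blast
  qed
  have one: "1 \<notin> J" unfolding J_def using rnu by (simp add: hom_one[OF hom_psi])
  have dom: "quotient_is_domain 1 J"
    unfolding quotient_is_domain_def
  proof (intro conjI ballI impI)
    show "J \<noteq> polys 1" using one polys_one by blast
  next
    fix a b assume "a \<in> polys 1" "b \<in> polys 1" "a * b \<in> J"
    then show "a \<in> J \<or> b \<in> J" unfolding J_def using r(2)
      by (auto simp: hom_mult[OF hom_psi] prime_elem_dvd_mult_iff)
  qed
  have cst: "\<forall>c. const_poly c \<in> J \<longrightarrow> c = 0"
  proof (intro allI impI)
    fix c assume "const_poly c \<in> J"
    then have "r dvd [:to_fract c:]" unfolding J_def by simp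
    moreover have "c \<noteq> 0 \<Longrightarrow> is_unit [:to_fract c:]"
      by (simp add: is_unit_const_poly_iff dvd_field_iff)
    ultimately show "c = 0" using rnu by (meson dvd_trans)
  qed
  have "1 \<notin> T_radical 1 I" unfolding T_radical_def using J IJ dom cst one by blast
  moreover have "radical 1 I \<subseteq> T_radical 1 I" by (rule rad_sub_Trad[OF ideal_sub[OF Iid]])
  ultimately show ?thesis using V fg by blast
qed

theorem theorem4p1:
  shows "(alg_closed_field TYPE('a::idom) \<longleftrightarrow>
           (\<forall>n. \<forall>I::'a mpoly set. fin_gen_ideal n I \<longrightarrow>
               vanishing_ideal n (zero_set n I) = radical n I)) \<and>
         (alg_closed_field TYPE('a) \<longleftrightarrow>
           (\<forall>n. \<forall>I::'a mpoly set. fin_gen_ideal n I \<longrightarrow>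
               vanishing_ideal n (zero_set n I) = T_radical n I))"
proof (cases "alg_closed_field TYPE('a)")
  case True
  have "vanishing_ideal n (zero_set n I) = T_radical n I" if fg: "fin_gen_ideal n I" for n and I :: "'a mpoly set"
  proof -
    have IP: "I \<subseteq> polys n" using fg gen_ideal_ideal ideal_sub unfolding fin_gen_ideal_def by metis
    show ?thesis using V_eq_rad[OF True fg] rad_sub_Trad[OF IP] Trad_sub_V[OF IP] by blast
  qed
  then show ?thesis using True V_eq_rad by blast
next
  case False
  from not_ac_poly[OF False] obtain q :: "'a poly" where "degree q > 0" "\<forall>x. poly q x \<noteq> 0" by blast
  from counter[OF this] show ?thesis using False by blast
qed

end
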